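(* Let $\Gamma$ be any group and let $\rho_1,\rho_2\colon \Gamma\to \mathrm{PSL}(2,\mathbb{R})$ be homomorphisms. Suppose that $\rho_1$ is non-elementary and non-discrete, and that $\mathrm{rot}(\rho_1(\gamma))=\mathrm{rot}(\rho_2(\gamma))$ for every $\gamma\in\Gamma$. Then for every $\gamma\in\Gamma$, $$|\mathrm{tr}\,\rho_1(\gamma)|=|\mathrm{tr}\,\rho_2(\gamma)|.$$
   Context: $\mathrm{PSL}(2,\mathbb{R})$ is identified with the group of orientation-preserving isometries of the hyperbolic plane $\mathbb{H}^2$, and hence acts by orientation-preserving homeomorphisms on the circle at infinity $\partial_\infty\mathbb{H}^2\cong S^1$. For $A\in\mathrm{PSL}(2,\mathbb{R})$, $\mathrm{rot}(A)\in\mathbb{R}/2\pi\mathbb{Z}$ denotes the (Poincaré) rotation number of this circle homeomorphism. Concretely, $\mathrm{rot}(A)=0$ if $A$ is hyperbolic, parabolic or the identity, and $\mathrm{rot}(A)$ is the angle of rotation of $A$ if $A$ is elliptic; e.g. $\pm\begin{pmatrix}\cos\theta&\sin\theta\\-\sin\theta&\cos\theta\end{pmatrix}$ is a rotation of angle $2\theta$ of $\mathbb{H}^2$. For $A=\pm M\in\mathrm{PSL}(2,\mathbb{R})$ with $M\in\mathrm{SL}(2,\mathbb{R})$, $|\mathrm{tr}\,A|:=|\mathrm{tr}\,M|$, which is well defined. A representation $\rho$ is called elementary if $\rho(\Gamma)$ has a finite orbit in $\mathbb{H}^2\cup\partial_\infty\mathbb{H}^2$, and non-elementary otherwise. It is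 called non-discrete if $\rho(\Gamma)$ is not a discrete subgroup of $\mathrm{PSL}(2,\mathbb{R})$. *)

theory Defs
  imports "HOL-Analysis.Analysis" "HOL-Algebra.Group"
begin

text \<open>Elements of SL(2,R) are 2x2 real matrices of determinant 1; an element of
PSL(2,R) is represented by either of its two lifts M, -M.\<close>

definition SL2 :: "(real^2^2) set" where
  "SL2 = {M. det M = 1}"

definition psl_eq :: "real^2^2 \<Rightarrow> real^2^2 \<Rightarrow> bool" where
  "psl_eq A B \<longleftrightarrow> A = B \<or> A = - B"

definition psl_hom :: "('g, 'z) monoid_scheme \<Rightarrow> ('g \<Rightarrow> real^2^2) \<Rightarrow> bool" where
  "psl_hom G \<rho> \<longleftrightarrow> (\<forall>x\<in>carrier G. \<rho> x \<in> SL2) \<and>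
     (\<forall>x\<in>carrier G. \<forall>y\<in>carrier G. psl_eq (\<rho> (x \<otimes>\<^bsub>G\<^esub> y)) (\<rho> x ** \<rho> y))"

definition abs_tr :: "real^2^2 \<Rightarrow> real" where
  "abs_tr M = \<bar>M$1$1 + M$2$2\<bar>"

text \<open>Points of the closed hyperbolic plane in the upper half-plane model:
Some z with Im z > 0 (interior points of H^2), Some x with x real or None (= infinity)
(points of the circle at infinity).\<close>
definition closed_H2 :: "complex option set" where
  "closed_H2 = {None} \<union> Some ` {z. Im z \<ge> 0}"

definition mob :: "real^2^2 \<Rightarrow> complex option \<Rightarrow> complex option" where
  "mob M p = (let a = complex_of_real (M$1$1); b = complex_of_real (M$1$2);
                  c = complex_of_real (M$2$1); d = complex_of_real (M$2$2) in
     (case p of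
        None \<Rightarrow> (if c = 0 then None else Some (a / c))
      | Some z \<Rightarrow> (if c * z + d = 0 then None else Some ((a * z + b) / (c * z + d)))))"

definition elementary :: "('g, 'z) monoid_scheme \<Rightarrow> ('g \<Rightarrow> real^2^2) \<Rightarrow> bool" where
  "elementary G \<rho> \<longleftrightarrow> (\<exists>p\<in>closed_H2. finite ((\<lambda>g. mob (\<rho> g) p) ` carrier G))"

text \<open>Discreteness of rho(Gamma) in PSL(2,R): its full preimage in SL(2,R)
(a two-sheeted cover of PSL(2,R)) is a discrete subset.\<close>
definition psl_image :: "('g, 'z) monoid_scheme \<Rightarrow> ('g \<Rightarrow> real^2^2) \<Rightarrow> (real^2^2) set" where
  "psl_image G \<rho> = {A. \<exists>g\<in>carrier G. A = \<rho> g \<or> A = - \<rho> g}"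

definition discrete_set :: "(real^2^2) set \<Rightarrow> bool" where
  "discrete_set S \<longleftrightarrow> (\<forall>A\<in>S. \<exists>e>0. \<forall>B\<in>S. dist B A < e \<longrightarrow> B = A)"

definition discrete_rep :: "('g, 'z) monoid_scheme \<Rightarrow> ('g \<Rightarrow> real^2^2) \<Rightarrow> bool" where
  "discrete_rep G \<rho> \<longleftrightarrow> discrete_set (psl_image G \<rho>)"

text \<open>Rotation number, with values in R/2piZ represented by the angle in (-pi, pi].
For elliptic M (|tr M| < 2) it is the rotation angle of the isometry at its fixed point
z0 in H^2, i.e. the argument of the derivative 1/(c z0 + d)^2 of z \<mapsto> (az+b)/(cz+d) at z0;
otherwise (hyperbolic, parabolic, identity) it is 0.\<close>
definition fixpt :: "real^2^2 \<Rightarrow> complex" where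
  "fixpt M = (THE z. Im z > 0 \<and> mob M (Some z) = Some z)"

definition rot :: "real^2^2 \<Rightarrow> real" where
  "rot M = (if abs_tr M < 2
            then Arg (inverse ((complex_of_real (M$2$1) * fixpt M + complex_of_real (M$2$2))\<^sup>2))
            else 0)"

end

theory Submission
  imports Defs
begin


definition mk :: "real \<Rightarrow> real \<Rightarrow> real \<Rightarrow> real \<Rightarrow> real^2^2" where
  "mk a b c d = (\<chi> i j. if i = 1 then (if j = 1 then a else b) else (if j = 1 then c else d))"

lemma mk_nth[simp]: "mk a b c d $1$1 = a" "mk a b c d $1$2 = b" "mk a b c d $2$1 = c" "mk a b c d $2$2 = d"
  by (simp_all add: mk_def)

lemma mk_eta: "M = mk (M$1$1) (M$1$2) (M$2$1) (M$2$2)"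
  unfolding mk_def vec_eq_iff forall_2 by auto

lemma mk_eq[simp]: "mk a b c d = mk a' b' c' d' \<longleftrightarrow> a = a' \<and> b = b' \<and> c = c' \<and> d = d'"
  unfolding vec_eq_iff forall_2 by auto

lemma mk_mult[simp]: "mk a b c d ** mk a' b' c' d' = mk (a*a'+b*c') (a*b'+b*d') (c*a'+d*c') (c*b'+d*d')"
  unfolding matrix_matrix_mult_def vec_eq_iff forall_2 sum_2 by simp

lemma mk_neg[simp]: "- mk a b c d = mk (-a) (-b) (-c) (-d)"
  unfolding vec_eq_iff forall_2 by simp

lemma mk_add[simp]: "mk a b c d + mk a' b' c' d' = mk (a+a') (b+b') (c+c') (d+d')"
  unfolding vec_eq_iff forall_2 by simp

lemma mk_diff[simp]: "mk a b c d - mk a' b' c' d' = mk (a-a') (b-b') (c-c') (d-d')"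
  unfolding vec_eq_iff forall_2 by simp

lemma mk_det[simp]: "det (mk a b c d) = a*d - b*c"
  by (simp add: det_2)

lemma mk_one: "mat 1 = mk 1 0 0 1"
  unfolding vec_eq_iff forall_2 mat_def by simp

lemma norm_mk: "norm (mk a b c d) = sqrt (a^2+b^2+c^2+d^2)"
  unfolding norm_vec_def L2_set_def UNIV_2 by (simp add: power2_eq_square algebra_simps)


lemma mob_Some: "mob M (Some z) = (if complex_of_real (M$2$1) * z + complex_of_real (M$2$2) = 0 then None
   else Some ((complex_of_real (M$1$1) * z + complex_of_real (M$1$2)) / (complex_of_real (M$2$1) * z + complex_of_real (M$2$2))))"
  by (simp add: mob_def Let_def)

lemma fix_unique:
  fixes a b c d x y :: real
  assumes "a*d - b*c = 1" "\<bar>a+d\<bar> < 2" "y > 0"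
    and "c * (x^2 - y^2) + (d-a)*x - b = 0" "2*c*x*y + (d-a)*y = 0"
  shows "c \<noteq> 0 \<and> x = (a-d)/(2*c) \<and> y = sgn c * sqrt (4 - (a+d)^2) / (2*c)"
proof -
  have c0: "c \<noteq> 0"
  proof
    assume "c = 0"
    then have "a*d = 1" "d = a" using assms by auto
    then have "a^2 = 1" by (simp add: power2_eq_square)
    then have "\<bar>a\<bar> = 1" using power2_eq_1_iff by fastforce
    then show False using assms \<open>d = a\<close> by auto
  qed
  have "(2*c*x + (d-a))*y = 0" using assms(5) by (simp add: algebra_simps)
  then have "2*c*x + (d-a) = 0" using assms(3) by simp
  then have hx: "x = (a-d)/(2*c)" using c0 by (simp add: field_simps)
  have "c*y^2 = c*x^2 + (d-a)*x - b" using assms(4) by (simp add: algebra_simps)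
  moreover have "(2*c*y)^2 = 4*c*(c*y^2)" by (simp add: power2_eq_square)
  ultimately have "(2*c*y)^2 = 4*c*(c*x^2 + (d-a)*x - b)" by simp
  also have "\<dots> = (2*c*x)^2 + 2*(d-a)*(2*c*x) - 4*b*c" by (simp add: power2_eq_square algebra_simps)
  also have "2*c*x = a - d" using hx c0 by simp
  also have "(a-d)^2 + 2*(d-a)*(a-d) - 4*b*c = 4 - (a+d)^2" using assms(1) by (simp add: power2_eq_square algebra_simps)
  finally have sq: "(2*c*y)^2 = 4 - (a+d)^2" .
  have "\<bar>2*c*y\<bar> = sqrt (4 - (a+d)^2)" using sq by (metis real_sqrt_abs)
  then have "2*c*y = sgn c * sqrt (4 - (a+d)^2)" using assms(3) c0
    by (cases "c > 0") (auto simp: abs_mult sgn_if)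
  then show ?thesis using c0 hx by (simp add: field_simps)
qed

lemma fixeq:
  fixes M :: "real^2^2" and x y :: real
  assumes "M$2$1 \<noteq> 0" "y > 0"
  shows "mob M (Some (Complex x y)) = Some (Complex x y) \<longleftrightarrow>
    (M$2$1 * (x^2 - y^2) + (M$2$2 - M$1$1)*x - M$1$2 = 0 \<and> 2*M$2$1*x*y + (M$2$2-M$1$1)*y = 0)"
proof -
  define a b c d where "a = M$1$1" "b = M$1$2" "c = M$2$1" "d = M$2$2"
  define z where "z = Complex x y"
  have den: "complex_of_real c * z + complex_of_real d = Complex (c*x+d) (c*y)"
    by (simp add: z_def complex_eq_iff)
  have nz: "complex_of_real c * z + complex_of_real d \<noteq> 0" unfolding den using assms a_b_c_d_def
    by (simp add: complex_eq_iff)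
  have "mob M (Some z) = Some z \<longleftrightarrow> (complex_of_real a * z + complex_of_real b) / (complex_of_real c * z + complex_of_real d) = z"
    using nz by (simp add: mob_Some a_b_c_d_def)
  also have "\<dots> \<longleftrightarrow> complex_of_real a * z + complex_of_real b = z * (complex_of_real c * z + complex_of_real d)"
    using nz by (simp add: divide_eq_eq)
  also have "\<dots> \<longleftrightarrow> (c * (x^2 - y^2) + (d - a)*x - b = 0 \<and> 2*c*x*y + (d-a)*y = 0)"
    by (simp add: z_def complex_eq_iff power2_eq_square algebra_simps) (auto simp: algebra_simps)
  finally show ?thesis unfolding z_def a_b_c_d_def .
qed

lemma sq_lt4: "\<bar>x::real\<bar> < 2 \<longleftrightarrow> x^2 < 4"
proof -
  have "x^2 - 4 = (x-2)*(x+2)" by (simp add: power2_eq_square algebra_simps)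
  then have "x^2 < 4 \<longleftrightarrow> (x-2)*(x+2) < 0" by linarith
  also have "\<dots> \<longleftrightarrow> \<bar>x\<bar> < 2" by (auto simp: mult_less_0_iff)
  finally show ?thesis by simp
qed

lemma fixpt_ell:
  fixes M :: "real^2^2"
  assumes "det M = 1" "\<bar>M$1$1 + M$2$2\<bar> < 2"
  shows "M$2$1 \<noteq> 0 \<and> fixpt M = Complex ((M$1$1 - M$2$2)/(2*M$2$1)) (sgn (M$2$1) * sqrt (4 - (M$1$1 + M$2$2)^2) / (2*M$2$1))"
proof -
  define a b c d where "a = M$1$1" "b = M$1$2" "c = M$2$1" "d = M$2$2"
  have dt: "a*d - b*c = 1" using assms(1) by (simp add: det_2 a_b_c_d_def)
  have c0: "c \<noteq> 0"
  proof
    assume "c = 0"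
    then have "a*d = 1" using dt by simp
    then have "(a+d)^2 = (a-d)^2 + 4" by (simp add: power2_eq_square algebra_simps)
    then have "(a+d)^2 \<ge> 4" by simp
    then show False using assms(2) a_b_c_d_def sq_lt4[of "a+d"] by simp
  qed
  define x0 y0 where "x0 = (a-d)/(2*c)" "y0 = sgn c * sqrt (4 - (a+d)^2) / (2*c)"
  have s2: "sqrt (4 - (a+d)^2) > 0" using assms(2) a_b_c_d_def sq_lt4[of "a+d"] by simp
  have y0p: "y0 > 0" using c0 s2 unfolding x0_y0_def
    by (cases "c > 0") (auto simp: sgn_if field_simps)
  have sq: "(sqrt (4 - (a+d)^2))^2 = 4 - (a+d)^2" using s2 by (simp add: less_eq_real_def)
  have e1: "c * (x0^2 - y0^2) + (d - a)*x0 - b = 0"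
  proof -
    have "y0^2 = (4 - (a+d)^2) / (4*c^2)" unfolding x0_y0_def using sq c0
      by (simp add: power_divide power_mult_distrib sgn_if)
    then have "4*c*(c * (x0^2 - y0^2) + (d - a)*x0 - b) = (a-d)^2 - (4 - (a+d)^2) - 2*(a-d)^2 - 4*b*c"
      unfolding x0_y0_def using c0 by (simp add: field_simps power2_eq_square)
    also have "\<dots> = 0" using dt by (simp add: power2_eq_square algebra_simps)
    finally show ?thesis using c0 by simp
  qed
  have e2: "2*c*x0*y0 + (d-a)*y0 = 0" unfolding x0_y0_def using c0 by (simp add: field_simps)
  have fx: "mob M (Some (Complex x0 y0)) = Some (Complex x0 y0)"
    using fixeq[of M y0 x0] c0 y0p e1 e2 a_b_c_d_def by simp
  have "fixpt M = Complex x0 y0" unfolding fixpt_def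
  proof (rule the_equality)
    show "0 < Im (Complex x0 y0) \<and> mob M (Some (Complex x0 y0)) = Some (Complex x0 y0)" using fx y0p by simp
  next
    fix z assume z: "0 < Im z \<and> mob M (Some z) = Some z"
    obtain x y where zz: "z = Complex x y" by (cases z)
    have "y > 0" using z zz by simp
    with z zz fixeq[of M y x] c0 a_b_c_d_def have "c * (x^2 - y^2) + (d-a)*x - b = 0" "2*c*x*y + (d-a)*y = 0"
      by auto
    from fix_unique[OF dt _ \<open>y > 0\<close> this] assms(2) a_b_c_d_def
    show "z = Complex x0 y0" using zz x0_y0_def by auto
  qed
  then show ?thesis using c0 x0_y0_def a_b_c_d_def by simp
qed

lemma rot_ell:
  fixes M :: "real^2^2" and t s :: real
  assumes "det M = 1" "\<bar>M$1$1 + M$2$2\<bar> < 2"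
  and t_def: "t = M$1$1 + M$2$2"
  and s_def: "s = sgn (M$2$1) * sqrt (4 - t^2)"
  shows "rot M = Arg (Complex (t^2/2 - 1) (- (t* s)/2)) \<and> cmod (Complex (t^2/2 - 1) (- (t* s)/2)) = 1 \<and> s^2 = 4 - t^2"
proof -
  define a b c d where "a = M$1$1" "b = M$1$2" "c = M$2$1" "d = M$2$2"
  from fixpt_ell[OF assms(1,2)] have c0: "c \<noteq> 0" and fp: "fixpt M = Complex ((a-d)/(2*c)) (s/(2*c))"
    unfolding a_b_c_d_def s_def t_def by auto
  have "sqrt (4 - t^2)^2 = 4 - t^2" using assms(2) sq_lt4[of t] unfolding t_def by simp
  then have s2: "s^2 = 4 - t^2" unfolding s_def using c0 a_b_c_d_def by (simp add: power_mult_distrib sgn_if)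
  have lam: "complex_of_real c * fixpt M + complex_of_real d = Complex (t/2) (s/2)"
    unfolding fp using c0 by (simp add: complex_eq_iff t_def a_b_c_d_def field_simps)
  have sq: "(Complex (t/2) (s/2))^2 = Complex (t^2/2 - 1) (t* s/2)"
    using s2 by (simp add: complex_eq_iff power2_eq_square field_simps)
  have "(t^2/2 - 1)^2 + (t* s/2)^2 = t^4/4 - t^2 + 1 + t^2 * s^2/4" by (simp add: power2_eq_square field_simps power4_eq_xxxx)
  also have "\<dots> = t^4/4 - t^2 + 1 + t^2 * (4 - t^2)/4" using s2 by simp
  also have "\<dots> = 1" by (simp add: power2_eq_square field_simps power4_eq_xxxx)
  finally have nrm: "(t^2/2 - 1)^2 + (t* s/2)^2 = 1" .
  have inv: "inverse (Complex (t^2/2 - 1) (t* s/2)) = Complex (t^2/2 - 1) (- (t* s)/2)"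
    using nrm by (simp add: complex_eq_iff inverse_complex_def power2_eq_square)
  have "rot M = Arg (Complex (t^2/2 - 1) (- (t* s)/2))"
    unfolding rot_def abs_tr_def using assms(2) lam sq inv a_b_c_d_def t_def by simp
  moreover have "cmod (Complex (t^2/2 - 1) (- (t* s)/2)) = 1" using nrm by (simp add: cmod_def power2_eq_square)
  ultimately show ?thesis using s2 by simp
qed

lemma unit_Arg_eq:
  assumes "cmod w1 = 1" "cmod w2 = 1" "Arg w1 = Arg w2" shows "w1 = w2"
proof -
  have n: "w1 \<noteq> 0" "w2 \<noteq> 0" using assms(1,2) by auto
  have "sgn w1 = w1" using assms(1) by (simp add: sgn_div_norm)
  moreover have "sgn w2 = w2" using assms(2) by (simp add: sgn_div_norm)
  moreover have "cis (Arg w1) = sgn w1" using n(1) by (rule cis_Arg)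
  moreover have "cis (Arg w2) = sgn w2" using n(2) by (rule cis_Arg)
  ultimately show ?thesis using assms(3) by metis
qed

lemma rot_ne0:
  fixes M :: "real^2^2"
  assumes "det M = 1" "\<bar>M$1$1 + M$2$2\<bar> < 2"
  shows "rot M \<noteq> 0"
proof
  define t where "t = M$1$1 + M$2$2"
  define s where "s = sgn (M$2$1) * sqrt (4 - t^2)"
  assume r0: "rot M = 0"
  from rot_ell[OF assms t_def s_def] have R: "rot M = Arg (Complex (t^2/2 - 1) (- (t* s)/2))"
    and N: "cmod (Complex (t^2/2 - 1) (- (t* s)/2)) = 1" and s2: "s^2 = 4 - t^2"
    unfolding t_def s_def by auto
  have "Arg 1 = 0" by simp
  have "cmod (1::complex) = 1" by simp
  from unit_Arg_eq[OF N this] have "Complex (t^2/2 - 1) (- (t* s)/2) = 1" using R r0 \<open>Arg 1 = 0\<close> by simp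
  then have e1: "t^2/2 - 1 = 1" and e2: "t* s = 0" by (simp_all add: complex_eq_iff)
  have "t^2 < 4" using assms(2) sq_lt4 t_def by simp
  then show False using e1 by simp
qed

lemma rot_cmp:
  fixes M1 M2 :: "real^2^2"
  assumes "det M1 = 1" "det M2 = 1" "rot M1 = rot M2"
  shows "(\<bar>M1$1$1 + M1$2$2\<bar> < 2 \<longleftrightarrow> \<bar>M2$1$1 + M2$2$2\<bar> < 2) \<and>
         (\<bar>M1$1$1 + M1$2$2\<bar> < 2 \<longrightarrow> (M1$1$1 + M1$2$2)^2 = (M2$1$1 + M2$2$2)^2)"
proof -
  have A: "(\<bar>M1$1$1 + M1$2$2\<bar> < 2 \<longleftrightarrow> \<bar>M2$1$1 + M2$2$2\<bar> < 2)"
  proof -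
    have z1: "\<not> \<bar>M1$1$1 + M1$2$2\<bar> < 2 \<Longrightarrow> rot M1 = 0" unfolding rot_def abs_tr_def by simp
    have z2: "\<not> \<bar>M2$1$1 + M2$2$2\<bar> < 2 \<Longrightarrow> rot M2 = 0" unfolding rot_def abs_tr_def by simp
    show ?thesis using rot_ne0[OF assms(1)] rot_ne0[OF assms(2)] assms(3) z1 z2 by metis
  qed
  moreover have "(M1$1$1 + M1$2$2)^2 = (M2$1$1 + M2$2$2)^2" if E: "\<bar>M1$1$1 + M1$2$2\<bar> < 2"
  proof -
    define t1 where "t1 = M1$1$1 + M1$2$2"
    define s1 where "s1 = sgn (M1$2$1) * sqrt (4 - t1^2)"
    define t2 where "t2 = M2$1$1 + M2$2$2"
    define s2 where "s2 = sgn (M2$2$1) * sqrt (4 - t2^2)"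
    have E2: "\<bar>M2$1$1 + M2$2$2\<bar> < 2" using A E by simp
    from rot_ell[OF assms(1) E t1_def s1_def] have R1: "rot M1 = Arg (Complex (t1^2/2 - 1) (- (t1* s1)/2))"
      and N1: "cmod (Complex (t1^2/2 - 1) (- (t1* s1)/2)) = 1" unfolding t1_def s1_def by auto
    from rot_ell[OF assms(2) E2 t2_def s2_def] have R2: "rot M2 = Arg (Complex (t2^2/2 - 1) (- (t2* s2)/2))"
      and N2: "cmod (Complex (t2^2/2 - 1) (- (t2* s2)/2)) = 1" unfolding t2_def s2_def by auto
    have "Complex (t1^2/2 - 1) (- (t1* s1)/2) = Complex (t2^2/2 - 1) (- (t2* s2)/2)"
      using unit_Arg_eq[OF N1 N2] R1 R2 assms(3) by simp
    then have "t1^2/2 - 1 = t2^2/2 - 1" by simp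
    then show ?thesis unfolding t1_def t2_def by simp
  qed
  ultimately show ?thesis by blast
qed


lemma rec_inv:
  fixes u :: "nat \<Rightarrow> real"
  assumes r: "\<And>k. u (Suc (Suc k)) = t * u (Suc k) - u k"
  shows "u k ^2 + u (Suc k) ^2 - t * u k * u (Suc k) = u 0 ^2 + u 1 ^2 - t * u 0 * u 1"
proof (induction k)
  case 0 then show ?case by simp
next
  case (Suc k)
  have "u (Suc k) ^2 + u (Suc (Suc k)) ^2 - t * u (Suc k) * u (Suc (Suc k)) = u k ^2 + u (Suc k) ^2 - t * u k * u (Suc k)"
    unfolding r by (simp add: power2_eq_square algebra_simps)
  then show ?case using Suc by simp
qed

lemma rec_sq3:
  fixes u :: "nat \<Rightarrow> real"
  assumes r: "\<And>k. u (Suc (Suc k)) = t * u (Suc k) - u k"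
  shows "u n ^2 = u (n+3) ^2 - (t^2 - 1) * (u (n+2) ^2 - u (n+1) ^2)"
proof -
  have a: "u (n+2) = t * u (n+1) - u n" using r[of n] by (simp add: numeral_eq_Suc)
  have b: "u (n+3) = t * u (n+2) - u (n+1)" using r[of "n+1"] by (simp add: numeral_eq_Suc)
  show ?thesis unfolding b unfolding a by (simp add: power2_eq_square algebra_simps)
qed

lemma rec_sign_change:
  fixes u :: "nat \<Rightarrow> real"
  assumes r: "\<And>k. u (Suc (Suc k)) = t * u (Suc k) - u k" and t2: "t < 2" and u0: "u 0 > 0"
  shows "\<exists>m. u m \<le> 0"
proof (rule ccontr)
  assume "\<not> ?thesis"
  then have pos: "\<And>k. u k > 0" by (simp add: not_le)
  define D where "D k = u (Suc k) - u k" for k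
  have Dstep: "D (Suc k) = D k - (2 - t) * u (Suc k)" for k
    unfolding D_def r by (simp add: algebra_simps)
  have Ddec: "D (Suc k) \<le> D k" for k using Dstep[of k] pos[of "Suc k"] t2 by simp
  have Dmono: "D (k + j) \<le> D k" for k j
    by (induction j) (auto intro: order_trans[OF Ddec])
  show False
  proof (cases "\<exists>K. D K < 0")
    case True
    then obtain K where K: "D K < 0" by blast
    have ub: "u (K + j) \<le> u K + real j * D K" for j
    proof (induction j)
      case 0 then show ?case by simp
    next
      case (Suc j)
      have "u (K + Suc j) = u (K + j) + D (K + j)" unfolding D_def by simp
      also have "\<dots> \<le> u K + real j * D K + D K" using Suc Dmono[of K j] by simp
      finally show ?case by (simp add: algebra_simps)
    qed
    obtain j :: nat where "real j > u K / (- D K)" using reals_Archimedean2 by blast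
    then have "real j * (- D K) > u K" using K by (simp add: field_simps)
    then have "u (K + j) < 0" using ub[of j] by (simp add: algebra_simps)
    then show False using pos by (metis not_less_iff_gr_or_eq)
  next
    case False
    then have Dnn: "\<And>k. D k \<ge> 0" by (simp add: not_less)
    have ulb: "u k \<ge> u 0" for k
    proof (induction k)
      case (Suc k) then show ?case using Dnn[of k] unfolding D_def by simp
    qed simp
    have Dub: "D k \<le> D 0 - real k * ((2 - t) * u 0)" for k
    proof (induction k)
      case (Suc k)
      have "D (Suc k) \<le> D k - (2 - t) * u 0" using Dstep[of k] ulb[of "Suc k"] t2
        by (smt (verit) mult_left_mono)
      then show ?case using Suc by (simp add: algebra_simps)
    qed simp
    have cpos: "(2 - t) * u 0 > 0" using t2 u0 by simp
    obtain k :: nat where "real k > D 0 / ((2 - t) * u 0)" using reals_Archimedean2 by blast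
    then have "real k * ((2 - t) * u 0) > D 0" using cpos by (simp add: field_simps)
    then show False using Dub[of k] Dnn[of k] by simp
  qed
qed

lemma step_small:
  fixes x y t I :: real
  assumes "x^2 + y^2 - t*x*y = I" "I < 1/100" "0 \<le> 2 - t" "2 - t < 1/100" "\<bar>x\<bar> \<le> 2"
  shows "\<bar>y - x\<bar> < 1/2"
proof (rule ccontr)
  define D where "D = y - x"
  assume "\<not> ?thesis"
  then have D2: "\<bar>D\<bar> \<ge> 1/2" unfolding D_def by simp
  have "I = D^2 + (2-t)*x^2 + (2-t)*(x*D)" using assms(1) unfolding D_def by (simp add: power2_eq_square algebra_simps)
  moreover have "(2-t)*x^2 \<ge> 0" using assms(3) by simp
  moreover have "(2-t)*(x*D) \<ge> - ((2-t)*(2*\<bar>D\<bar>))"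
  proof -
    have "\<bar>x*D\<bar> \<le> 2*\<bar>D\<bar>" using assms(5) by (simp add: abs_mult mult_right_mono)
    then have "x*D \<ge> - (2*\<bar>D\<bar>)" by linarith
    then show ?thesis using assms(3) mult_left_mono by fastforce
  qed
  ultimately have "D^2 \<le> I + (2-t)*(2*\<bar>D\<bar>)" by linarith
  also have "\<dots> \<le> I + (1/100)*(2*\<bar>D\<bar>)" using assms(4) by (intro add_left_mono mult_right_mono) auto
  finally have A: "D^2 < 1/100 + \<bar>D\<bar>/50" using assms(2) by simp
  have "D^2 = \<bar>D\<bar> * \<bar>D\<bar>" by (simp add: power2_eq_square abs_mult_self_eq)
  also have "\<dots> \<ge> \<bar>D\<bar> * (1/2)" using D2 by (intro mult_left_mono) auto
  finally show False using A D2 by linarith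
qed

lemma rec_main_pos:
  fixes u v :: "nat \<Rightarrow> real"
  assumes ru: "\<And>k. u (Suc (Suc k)) = t * u (Suc k) - u k"
    and rv: "\<And>k. v (Suc (Suc k)) = t * v (Suc k) - v k"
    and t0: "0 \<le> t" and t2: "t < 2" and te: "2 - t < 1/100"
    and I: "u 0 ^2 + u 1 ^2 - t * u 0 * u 1 < 1/100"
    and u0: "u 0 > 0"
    and H: "\<And>k. \<bar>u k\<bar> < 2 \<Longrightarrow> u k ^2 = v k ^2"
  shows "u 0 ^2 = v 0 ^2"
proof -
  define I0 where "I0 = u 0 ^2 + u 1 ^2 - t * u 0 * u 1"
  have inv: "u k ^2 + u (Suc k) ^2 - t * u k * u (Suc k) = I0" for k
    using rec_inv[where u=u and t=t, OF ru] I0_def by simp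
  have ex: "\<exists>m. u m \<le> 0" using rec_sign_change[where u=u and t=t, OF ru t2 u0] .
  define m where "m = (LEAST m. u m \<le> 0)"
  have um: "u m \<le> 0" unfolding m_def using ex by (rule LeastI_ex)
  have m0: "m \<noteq> 0" using um u0 by (metis not_le)
  define p where "p = m - 1"
  have mp: "m = Suc p" using m0 p_def by simp
  have up: "u p > 0" using not_less_Least[of p "\<lambda>m. u m \<le> 0"] mp m_def by simp
  have "u p ^2 \<le> I0"
  proof -
    have "- (t * u p * u (Suc p)) \<ge> 0" using t0 up um mp
      by (simp add: mult_nonneg_nonpos)
    then show ?thesis using inv[of p] by (smt (verit) zero_le_power2)
  qed
  then have "u p ^2 < 1/100" using I I0_def by simp
  then have a0: "\<bar>u p\<bar> < 1/10"
  proof -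
    assume h: "u p ^2 < 1/100"
    show ?thesis
    proof (rule ccontr)
      assume "\<not> \<bar>u p\<bar> < 1/10"
      then have "(1/10)^2 \<le> \<bar>u p\<bar>^2" by (intro power_mono) auto
      then show False using h by (simp add: power2_eq_square)
    qed
  qed
  have I0s: "I0 < 1/100" using I I0_def by simp
  have a1: "\<bar>u (Suc p)\<bar> < 6/10"
  proof -
    have "\<bar>u (Suc p) - u p\<bar> < 1/2" using step_small[OF inv[of p] I0s _ te] a0 t2 by simp
    then show ?thesis using a0 by linarith
  qed
  have a2: "\<bar>u (Suc (Suc p))\<bar> < 11/10"
  proof -
    have "\<bar>u (Suc (Suc p)) - u (Suc p)\<bar> < 1/2" using step_small[OF inv[of "Suc p"] I0s _ te] a1 t2 by simp
    then show ?thesis using a1 by linarith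
  qed
  define w where "w k = u k ^2 - v k ^2" for k
  have wrec: "w n = w (n+3) - (t^2 - 1) * (w (n+2) - w (n+1))" for n
    using rec_sq3[where u=u and t=t, OF ru, of n] rec_sq3[where u=v and t=t, OF rv, of n] unfolding w_def by (simp add: algebra_simps)
  have z: "w p = 0 \<and> w (p+1) = 0 \<and> w (p+2) = 0"
    using H[of p] H[of "Suc p"] H[of "Suc (Suc p)"] a0 a1 a2 unfolding w_def by (simp add: numeral_eq_Suc)
  have "\<forall>d. d \<le> p \<longrightarrow> w (p - d) = 0 \<and> w (p - d + 1) = 0 \<and> w (p - d + 2) = 0"
  proof
    fix d show "d \<le> p \<longrightarrow> w (p - d) = 0 \<and> w (p - d + 1) = 0 \<and> w (p - d + 2) = 0"
    proof (induction d)
      case 0 then show ?case using z by simp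
    next
      case (Suc d)
      show ?case
      proof
        assume "Suc d \<le> p"
        then have IH: "w (p - d) = 0 \<and> w (p - d + 1) = 0 \<and> w (p - d + 2) = 0" using Suc by simp
        have e: "p - d = (p - Suc d) + 1" using \<open>Suc d \<le> p\<close> by simp
        have "w (p - Suc d) = 0" using wrec[of "p - Suc d"] IH unfolding e by (simp add: add.assoc numeral_eq_Suc)
        then show "w (p - Suc d) = 0 \<and> w (p - Suc d + 1) = 0 \<and> w (p - Suc d + 2) = 0"
          using IH unfolding e by (simp add: add.assoc)
      qed
    qed
  qed
  then have "w 0 = 0" by (metis diff_self_eq_0 order_refl)
  then show ?thesis unfolding w_def by simp
qed

lemma rec_main:
  fixes u v :: "nat \<Rightarrow> real"
  assumes ru: "\<And>k. u (Suc (Suc k)) = t * u (Suc k) - u k"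
    and rv: "\<And>k. v (Suc (Suc k)) = t * v (Suc k) - v k"
    and t0: "0 \<le> t" and t2: "t < 2" and te: "2 - t < 1/100"
    and I: "u 0 ^2 + u 1 ^2 - t * u 0 * u 1 < 1/100"
    and u0: "\<bar>u 0\<bar> \<ge> 2"
    and H: "\<And>k. \<bar>u k\<bar> < 2 \<Longrightarrow> u k ^2 = v k ^2"
  shows "u 0 ^2 = v 0 ^2"
proof (cases "u 0 > 0")
  case True then show ?thesis using rec_main_pos[where u=u and v=v and t=t, OF ru rv t0 t2 te I _ H] by simp
next
  case False
  then have n: "(- u 0) > 0" using u0 by simp
  have ru': "\<And>k. (- u (Suc (Suc k))) = t * (- u (Suc k)) - (- u k)" using ru by simp
  have "(- u 0) ^2 = v 0 ^2"
    by (rule rec_main_pos[where u="\<lambda>k. - u k" and v=v and t=t, OF ru' rv t0 t2 te _ n]) (use I H in auto)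
  then show ?thesis by simp
qed


definition trc :: "real^2^2 \<Rightarrow> real" where "trc M = M$1$1 + M$2$2"
definition adj :: "real^2^2 \<Rightarrow> real^2^2" where "adj M = mk (M$2$2) (- M$1$2) (- M$2$1) (M$1$1)"

lemma trc_mk[simp]: "trc (mk a b c d) = a + d" by (simp add: trc_def)
lemma adj_mk[simp]: "adj (mk a b c d) = mk d (-b) (-c) a" by (simp add: adj_def)

context fixes A B C M :: "real^2^2" begin

lemma mm_lneg: "(- A) ** B = - (A ** B)"
  by (subst (1 2) mk_eta[of A], subst (1 2) mk_eta[of B]) (simp add: algebra_simps)
lemma mm_rneg: "A ** (- B) = - (A ** B)"
  by (subst (1 2) mk_eta[of A], subst (1 2) mk_eta[of B]) (simp add: algebra_simps)
lemma adj_right: "det M = 1 \<Longrightarrow> M ** adj M = mat 1"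
  by (subst (1 2) mk_eta[of M]) (use det_2[of M] in \<open>simp add: mk_one algebra_simps\<close>)
lemma adj_left: "det M = 1 \<Longrightarrow> adj M ** M = mat 1"
  by (subst (1 2) mk_eta[of M]) (use det_2[of M] in \<open>simp add: mk_one algebra_simps\<close>)
lemma det_neg[simp]: "det (- M) = det M"
  by (subst (1 2) mk_eta[of M]) simp
lemma det_mult: "det (A ** B) = det A * det B"
  by (subst (1 2) mk_eta[of A], subst (1 2) mk_eta[of B]) (simp add: algebra_simps)
lemma det_adj[simp]: "det (adj M) = det M"
  by (subst (1 2) mk_eta[of M]) (simp add: algebra_simps)
lemma adj_neg: "adj (- M) = - adj M"
  by (subst (1 2) mk_eta[of M]) simp
lemma abs_tr_neg[simp]: "abs_tr (- M) = abs_tr M"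
  by (simp add: abs_tr_def)
lemma trc_neg[simp]: "trc (- M) = - trc M"
  by (simp add: trc_def)
lemma cdiv_neg: "(- p - q) / (- r - s) = ((p + q) / (r + s) :: complex)"
proof -
  have "(- p - q) = -(p+q)" "(- r - s) = -(r+s)" by simp_all
  then show ?thesis by (simp only: minus_divide_divide)
qed

lemma mob_neg[simp]: "mob (- M) p = mob M p"
proof (cases p)
  case None then show ?thesis by (simp add: mob_def Let_def)
next
  case (Some z)
  define a b c d where "a = complex_of_real (M$1$1)" "b = complex_of_real (M$1$2)"
    "c = complex_of_real (M$2$1)" "d = complex_of_real (M$2$2)"
  have e1: "(- c) * z + (- d) = - (c * z + d)" by simp
  have e2: "(- a) * z + (- b) = - (a * z + b)" by simp
  have f1: "- (c*z) - d = - (c*z+d)" "- (a*z) - b = - (a*z+b)" by simp_all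
  have f2: "- (c*z) = d \<longleftrightarrow> c*z + d = 0" by (metis add.commute neg_eq_iff_add_eq_0)
  show ?thesis unfolding Some mob_def Let_def
    using e1 e2 f1 f2 by (simp add: a_b_c_d_def[symmetric] cdiv_neg del: minus_add_distrib)
qed

end

lemma psl_eq_refl[simp]: "psl_eq A A" by (simp add: psl_eq_def)
lemma psl_eq_sym: "psl_eq A B \<Longrightarrow> psl_eq B A" by (auto simp: psl_eq_def)
lemma psl_eq_trans: "psl_eq A B \<Longrightarrow> psl_eq B C \<Longrightarrow> psl_eq A C" by (auto simp: psl_eq_def)
lemma psl_eq_neg: "psl_eq A (- B) \<longleftrightarrow> psl_eq A B" by (auto simp: psl_eq_def)
lemma psl_eq_multL: "psl_eq A B \<Longrightarrow> psl_eq (C ** A) (C ** B)" by (auto simp: psl_eq_def mm_rneg)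
lemma psl_eq_multR: "psl_eq A B \<Longrightarrow> psl_eq (A ** C) (B ** C)" by (auto simp: psl_eq_def mm_lneg)
lemma psl_eq_abs_tr: "psl_eq A B \<Longrightarrow> abs_tr A = abs_tr B" by (auto simp: psl_eq_def)
lemma psl_eq_det: "psl_eq A B \<Longrightarrow> det A = det B" by (auto simp: psl_eq_def)
lemma psl_eq_mob: "psl_eq A B \<Longrightarrow> mob A p = mob B p" by (auto simp: psl_eq_def)

context fixes A B C M :: "real^2^2" begin

lemma mk_scaleR[simp]: "x *\<^sub>R mk a b c d = mk (x*a) (x*b) (x*c) (x*d)"
  unfolding vec_eq_iff forall_2 by simp

lemma cayley: "det M = 1 \<Longrightarrow> M ** M = trc M *\<^sub>R M - mat 1"
  by (subst (1 2 3 4) mk_eta[of M]) (use det_2[of M] in \<open>simp add: mk_one algebra_simps power2_eq_square\<close>)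

lemma trc_lin: "trc (A ** (x *\<^sub>R B - C)) = x * trc (A ** B) - trc (A ** C)"
  by (subst (1 2 3) mk_eta[of A], subst (1 2) mk_eta[of B], subst (1 2) mk_eta[of C]) (simp add: algebra_simps)

lemma mm_scaleR_right: "A ** (x *\<^sub>R B) = x *\<^sub>R (A ** B)"
  by (subst (1 2) mk_eta[of A], subst (1 2) mk_eta[of B]) (simp add: algebra_simps)

lemma mm_diff_right: "A ** (B - C) = A ** B - A ** C"
  by (subst (1 2 3) mk_eta[of A], subst (1 2) mk_eta[of B], subst (1 2) mk_eta[of C]) (simp add: algebra_simps)

end

primrec mpow :: "real^2^2 \<Rightarrow> nat \<Rightarrow> real^2^2" where
  "mpow B 0 = mat 1"
| "mpow B (Suc k) = mpow B k ** B"

lemma mpow_rec: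
  assumes "det B = 1"
  shows "trc (A ** mpow B (Suc (Suc k))) = trc B * trc (A ** mpow B (Suc k)) - trc (A ** mpow B k)"
proof -
  have "mpow B (Suc (Suc k)) = mpow B k ** (B ** B)" by (simp add: matrix_mul_assoc)
  also have "\<dots> = mpow B k ** (trc B *\<^sub>R B - mat 1)" using cayley[OF assms] by simp
  also have "\<dots> = trc B *\<^sub>R mpow B (Suc k) - mpow B k" by (simp add: mm_diff_right mm_scaleR_right)
  finally have "A ** mpow B (Suc (Suc k)) = A ** (trc B *\<^sub>R mpow B (Suc k) - mpow B k)" by simp
  then show ?thesis by (simp add: trc_lin)
qed

lemma mpow_neg: "psl_eq (mpow (- B) k) (mpow B k)"
proof (induction k)
  case (Suc k)
  then have "psl_eq (mpow (- B) k ** (- B)) (mpow B k ** (- B))" by (rule psl_eq_multR)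
  then show ?case by (simp add: mm_rneg psl_eq_neg)
qed simp

lemma psl_eq_abs_trc: "psl_eq A B \<Longrightarrow> \<bar>trc A\<bar> = \<bar>trc B\<bar>" by (auto simp: psl_eq_def)

context
  fixes G :: "('g, 'z) monoid_scheme" and \<rho> :: "'g \<Rightarrow> real^2^2"
  assumes grp: "group G" and hom: "psl_hom G \<rho>"
begin

lemma rho_det: "g \<in> carrier G \<Longrightarrow> det (\<rho> g) = 1"
  using hom by (auto simp: psl_hom_def SL2_def)

lemma rho_mult: "g \<in> carrier G \<Longrightarrow> h \<in> carrier G \<Longrightarrow> psl_eq (\<rho> (g \<otimes>\<^bsub>G\<^esub> h)) (\<rho> g ** \<rho> h)"
  using hom by (auto simp: psl_hom_def)

lemma rho_one: "psl_eq (\<rho> \<one>\<^bsub>G\<^esub>) (mat 1)"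
proof -
  interpret group G by (rule grp)
  define N where "N = \<rho> \<one>\<^bsub>G\<^esub>"
  have d: "det N = 1" using rho_det N_def by simp
  have "psl_eq N (N ** N)" using rho_mult[of "\<one>\<^bsub>G\<^esub>" "\<one>\<^bsub>G\<^esub>"] N_def by simp
  then have "psl_eq (N ** adj N) (N ** N ** adj N)" by (rule psl_eq_multR)
  then have "psl_eq (mat 1) N" using adj_right[OF d] by (simp add: matrix_mul_assoc[symmetric])
  then show ?thesis unfolding N_def by (rule psl_eq_sym)
qed

lemma rho_inv: "g \<in> carrier G \<Longrightarrow> psl_eq (\<rho> (inv\<^bsub>G\<^esub> g)) (adj (\<rho> g))"
proof -
  interpret group G by (rule grp)
  assume g: "g \<in> carrier G"
  have d: "det (\<rho> g) = 1" using rho_det g by simp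
  have "psl_eq (\<rho> (g \<otimes>\<^bsub>G\<^esub> inv\<^bsub>G\<^esub> g)) (\<rho> g ** \<rho> (inv\<^bsub>G\<^esub> g))" using rho_mult[OF g inv_closed[OF g]] by simp
  then have "psl_eq (\<rho> \<one>\<^bsub>G\<^esub>) (\<rho> g ** \<rho> (inv\<^bsub>G\<^esub> g))" using r_inv[OF g] by simp
  then have "psl_eq (mat 1) (\<rho> g ** \<rho> (inv\<^bsub>G\<^esub> g))" using rho_one
    by (metis psl_eq_sym psl_eq_trans)
  then have "psl_eq (adj (\<rho> g) ** mat 1) (adj (\<rho> g) ** (\<rho> g ** \<rho> (inv\<^bsub>G\<^esub> g)))" by (rule psl_eq_multL)
  then have "psl_eq (adj (\<rho> g)) (\<rho> (inv\<^bsub>G\<^esub> g))" using adj_left[OF d] by (simp add: matrix_mul_assoc)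
  then show ?thesis by (rule psl_eq_sym)
qed

lemma rho_pow: "g \<in> carrier G \<Longrightarrow> h \<in> carrier G \<Longrightarrow>
   psl_eq (\<rho> (g \<otimes>\<^bsub>G\<^esub> h [^]\<^bsub>G\<^esub> (k::nat))) (\<rho> g ** mpow (\<rho> h) k)"
proof (induction k)
  case 0
  interpret group G by (rule grp)
  show ?case using 0 by simp
next
  case (Suc k)
  interpret group G by (rule grp)
  have e: "g \<otimes>\<^bsub>G\<^esub> h [^]\<^bsub>G\<^esub> Suc k = (g \<otimes>\<^bsub>G\<^esub> h [^]\<^bsub>G\<^esub> k) \<otimes>\<^bsub>G\<^esub> h" using Suc.prems by (simp add: m_assoc)
  have "psl_eq (\<rho> ((g \<otimes>\<^bsub>G\<^esub> h [^]\<^bsub>G\<^esub> k) \<otimes>\<^bsub>G\<^esub> h)) (\<rho> (g \<otimes>\<^bsub>G\<^esub> h [^]\<^bsub>G\<^esub> k) ** \<rho> h)"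
    using rho_mult Suc.prems by simp
  moreover have "psl_eq (\<rho> (g \<otimes>\<^bsub>G\<^esub> h [^]\<^bsub>G\<^esub> k) ** \<rho> h) (\<rho> g ** mpow (\<rho> h) k ** \<rho> h)"
    using Suc by (intro psl_eq_multR) simp
  ultimately show ?case unfolding e by (simp add: matrix_mul_assoc psl_eq_trans)
qed

lemma img_iff: "M \<in> psl_image G \<rho> \<longleftrightarrow> (\<exists>g\<in>carrier G. psl_eq M (\<rho> g))"
  by (auto simp: psl_image_def psl_eq_def)

lemma img_det: "M \<in> psl_image G \<rho> \<Longrightarrow> det M = 1"
  by (auto simp: img_iff rho_det dest: psl_eq_det)

lemma img_eq: "M \<in> psl_image G \<rho> \<Longrightarrow> psl_eq N M \<Longrightarrow> N \<in> psl_image G \<rho>"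
  by (auto simp: img_iff intro: psl_eq_trans)

lemma img_neg: "M \<in> psl_image G \<rho> \<Longrightarrow> - M \<in> psl_image G \<rho>"
  by (erule img_eq) (simp add: psl_eq_def)

lemma img_of: "g \<in> carrier G \<Longrightarrow> \<rho> g \<in> psl_image G \<rho>"
  by (auto simp: img_iff intro!: bexI[of _ g])

lemma img_mult: "M \<in> psl_image G \<rho> \<Longrightarrow> N \<in> psl_image G \<rho> \<Longrightarrow> M ** N \<in> psl_image G \<rho>"
proof -
  interpret group G by (rule grp)
  assume "M \<in> psl_image G \<rho>" "N \<in> psl_image G \<rho>"
  then obtain g h where g: "g \<in> carrier G" "psl_eq M (\<rho> g)" and h: "h \<in> carrier G" "psl_eq N (\<rho> h)"
    by (auto simp: img_iff)
  have "psl_eq (M ** N) (\<rho> g ** N)" by (rule psl_eq_multR[OF g(2)])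
  moreover have "psl_eq (\<rho> g ** N) (\<rho> g ** \<rho> h)" by (rule psl_eq_multL[OF h(2)])
  moreover have "psl_eq (\<rho> g ** \<rho> h) (\<rho> (g \<otimes>\<^bsub>G\<^esub> h))" using rho_mult[OF g(1) h(1)] by (rule psl_eq_sym)
  ultimately have "psl_eq (M ** N) (\<rho> (g \<otimes>\<^bsub>G\<^esub> h))" by (metis psl_eq_trans)
  then show ?thesis using g h by (auto simp: img_iff)
qed

lemma img_adj: "M \<in> psl_image G \<rho> \<Longrightarrow> adj M \<in> psl_image G \<rho>"
proof -
  interpret group G by (rule grp)
  assume "M \<in> psl_image G \<rho>"
  then obtain g where g: "g \<in> carrier G" "M = \<rho> g \<or> M = - \<rho> g" by (auto simp: psl_image_def)
  have "psl_eq (adj M) (adj (\<rho> g))" using g(2) by (auto simp: psl_eq_def adj_neg)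
  then have "psl_eq (adj M) (\<rho> (inv\<^bsub>G\<^esub> g))" using rho_inv[OF g(1)] by (metis psl_eq_sym psl_eq_trans)
  then show ?thesis using g by (auto simp: img_iff)
qed

lemma img_one: "mat 1 \<in> psl_image G \<rho>"
proof -
  interpret group G by (rule grp)
  show ?thesis using rho_one by (auto simp: img_iff intro!: bexI[of _ "\<one>\<^bsub>G\<^esub>"] psl_eq_sym)
qed

end


lemma abs_tr_trc: "abs_tr M = \<bar>trc M\<bar>" by (simp add: abs_tr_def trc_def)

lemma rot_cmp': "det M1 = 1 \<Longrightarrow> det M2 = 1 \<Longrightarrow> rot M1 = rot M2 \<Longrightarrow>
   (\<bar>trc M1\<bar> < 2 \<longleftrightarrow> \<bar>trc M2\<bar> < 2) \<and> (\<bar>trc M1\<bar> < 2 \<longrightarrow> trc M1 ^2 = trc M2 ^2)"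
  using rot_cmp[of M1 M2] by (simp add: trc_def)

lemma sq_eq_abs: "(x::real)^2 = y^2 \<longleftrightarrow> \<bar>x\<bar> = \<bar>y\<bar>"
  by (metis abs_power2 power2_abs power2_eq_iff_nonneg abs_ge_zero)

lemma bound_I:
  fixes A E :: "real^2^2" and K \<eta> :: real
  assumes K: "K \<ge> 1" "\<bar>A$1$1\<bar> \<le> K" "\<bar>A$1$2\<bar> \<le> K" "\<bar>A$2$1\<bar> \<le> K" "\<bar>A$2$2\<bar> \<le> K"
    and eta: "\<eta> = 1 / (10000 * K^2)"
    and E: "\<bar>E$1$1\<bar> \<le> \<eta>" "\<bar>E$1$2\<bar> \<le> \<eta>" "\<bar>E$2$1\<bar> \<le> \<eta>" "\<bar>E$2$2\<bar> \<le> \<eta>"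
  defines "t \<equiv> 2 + E$1$1 + E$2$2"
  defines "u0 \<equiv> A$1$1 + A$2$2"
  defines "u1 \<equiv> u0 + (A$1$1 * E$1$1 + A$1$2 * E$2$1 + A$2$1 * E$1$2 + A$2$2 * E$2$2)"
  shows "0 \<le> t \<and> 2 - t < 1/100 \<and> u0^2 + u1^2 - t*u0*u1 < 1/100"
proof -
  have Kp: "K > 0" using K by simp
  have K2: "K^2 \<ge> 1" using K by (simp add: one_le_power)
  have etap: "\<eta> > 0" using eta Kp by simp
  have Ke: "K^2 * \<eta> = 1/10000" using eta Kp by simp
  have e1: "\<eta> \<le> 1/10000" using Ke K2 etap by (metis mult_le_cancel_right1 order_trans nle_le mult_right_mono mult_1 less_eq_real_def)
  have pb: "\<bar>x * y\<bar> \<le> K * \<eta>" if "\<bar>x\<bar> \<le> K" "\<bar>y\<bar> \<le> \<eta>" for x y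
    using that by (simp add: abs_mult mult_mono')
  define D where "D = A$1$1 * E$1$1 + A$1$2 * E$2$1 + A$2$1 * E$1$2 + A$2$2 * E$2$2"
  have D: "\<bar>D\<bar> \<le> 4 * (K * \<eta>)" unfolding D_def
    using pb[OF K(2) E(1)] pb[OF K(3) E(3)] pb[OF K(4) E(2)] pb[OF K(5) E(4)] by linarith
  have u0b: "\<bar>u0\<bar> \<le> 2*K" unfolding u0_def using K by linarith
  have Kee: "K * \<eta> \<le> K / 10000" using e1 Kp by simp
  have u1b: "\<bar>u1\<bar> \<le> 3*K" unfolding u1_def D_def[symmetric] using u0b D Kee Kp by linarith
  have tb: "\<bar>2 - t\<bar> \<le> 2*\<eta>" unfolding t_def using E by linarith
  have I: "u0^2 + u1^2 - t*u0*u1 = D^2 + (2 - t) * (u0 * u1)" unfolding u1_def D_def[symmetric]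
    by (simp add: power2_eq_square algebra_simps)
  have "D^2 \<le> (4 * (K * \<eta>))^2" using power_mono[OF D abs_ge_zero, of 2] by simp
  also have "\<dots> = 16 * (K^2 * \<eta>) * \<eta>" by (simp add: power2_eq_square)
  also have "\<dots> \<le> 16 * (1/10000) * (1/10000)" unfolding Ke using e1 by simp
  finally have Db: "D^2 \<le> 16 / 100000000" by simp
  have "\<bar>(2 - t) * (u0 * u1)\<bar> \<le> (2*\<eta>) * ((2*K) * (3*K))"
    unfolding abs_mult using tb u0b u1b by (intro mult_mono) auto
  also have "\<dots> = 12 * (K^2 * \<eta>)" by (simp add: power2_eq_square)
  finally have Pb: "\<bar>(2 - t) * (u0 * u1)\<bar> \<le> 12/10000" unfolding Ke by simp
  have "u0^2 + u1^2 - t*u0*u1 < 1/100" unfolding I using Db Pb by linarith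
  moreover have "0 \<le> t" "2 - t < 1/100" using tb e1 by linarith+
  ultimately show ?thesis by simp
qed

lemma mpow_psl: "psl_eq X Y \<Longrightarrow> psl_eq (mpow X k) (mpow Y k)"
  using mpow_neg[of Y k] by (auto simp: psl_eq_def)

lemma mpow_det: "det X = 1 \<Longrightarrow> det (mpow X k) = 1"
  by (induction k) (auto simp: det_mult)

lemma assemble:
  fixes G :: "('g, 'z) monoid_scheme" and \<rho>1 \<rho>2 :: "'g \<Rightarrow> real^2^2"
  assumes grp: "group G" and h1: "psl_hom G \<rho>1" and h2: "psl_hom G \<rho>2"
    and rot: "\<forall>\<gamma>\<in>carrier G. rot (\<rho>1 \<gamma>) = rot (\<rho>2 \<gamma>)"
    and NI: "\<And>\<eta>. \<eta> > 0 \<Longrightarrow> \<exists>B\<in>psl_image G \<rho>1. \<bar>trc B\<bar> < 2 \<and> \<bar>B$1$1 - 1\<bar> \<le> \<eta> \<and> \<bar>B$1$2\<bar> \<le> \<eta>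
                \<and> \<bar>B$2$1\<bar> \<le> \<eta> \<and> \<bar>B$2$2 - 1\<bar> \<le> \<eta>"
    and g: "\<gamma> \<in> carrier G"
  shows "abs_tr (\<rho>1 \<gamma>) = abs_tr (\<rho>2 \<gamma>)"
proof -
  interpret group G by (rule grp)
  define A1 A2 where "A1 = \<rho>1 \<gamma>" "A2 = \<rho>2 \<gamma>"
  have d1: "det A1 = 1" using rho_det[OF grp h1 g] A1_A2_def by simp
  have d2: "det A2 = 1" using rho_det[OF grp h2 g] A1_A2_def by simp
  have rc: "(\<bar>trc A1\<bar> < 2 \<longleftrightarrow> \<bar>trc A2\<bar> < 2) \<and> (\<bar>trc A1\<bar> < 2 \<longrightarrow> trc A1 ^2 = trc A2 ^2)"
    using rot_cmp'[OF d1 d2] rot g A1_A2_def by simp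
  show ?thesis
  proof (cases "\<bar>trc A1\<bar> < 2")
    case True
    then show ?thesis using rc A1_A2_def by (simp add: abs_tr_trc sq_eq_abs)
  next
    case False
    define K where "K = max 1 (max (max \<bar>A1$1$1\<bar> \<bar>A1$1$2\<bar>) (max \<bar>A1$2$1\<bar> \<bar>A1$2$2\<bar>))"
    have K: "K \<ge> 1" "\<bar>A1$1$1\<bar> \<le> K" "\<bar>A1$1$2\<bar> \<le> K" "\<bar>A1$2$1\<bar> \<le> K" "\<bar>A1$2$2\<bar> \<le> K"
      unfolding K_def by (simp_all add: le_max_iff_disj)
    define \<eta> where "\<eta> = 1 / (10000 * K^2)"
    have etap: "\<eta> > 0" unfolding \<eta>_def using K by simp
    obtain B where B: "B \<in> psl_image G \<rho>1" "\<bar>trc B\<bar> < 2" "\<bar>B$1$1 - 1\<bar> \<le> \<eta>" "\<bar>B$1$2\<bar> \<le> \<eta>"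
      "\<bar>B$2$1\<bar> \<le> \<eta>" "\<bar>B$2$2 - 1\<bar> \<le> \<eta>" using NI[OF etap] by blast
    obtain h where h: "h \<in> carrier G" "psl_eq B (\<rho>1 h)" using B(1) img_iff[OF grp h1] by blast
    have dB: "det B = 1" using img_det[OF grp h1 B(1)] .
    define E where "E = B - mat 1"
    have E: "\<bar>E$1$1\<bar> \<le> \<eta>" "\<bar>E$1$2\<bar> \<le> \<eta>" "\<bar>E$2$1\<bar> \<le> \<eta>" "\<bar>E$2$2\<bar> \<le> \<eta>"
      using B unfolding E_def by (simp_all add: mat_def)
    define t where "t = trc B"
    define u where "u k = trc (A1 ** mpow B k)" for k
    have t_eq: "t = 2 + E$1$1 + E$2$2" unfolding t_def E_def by (simp add: trc_def mat_def)
    have u0: "u 0 = A1$1$1 + A1$2$2" unfolding u_def by (simp add: trc_def)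
    have u1: "u 1 = u 0 + (A1$1$1 * E$1$1 + A1$1$2 * E$2$1 + A1$2$1 * E$1$2 + A1$2$2 * E$2$2)"
      unfolding u0 unfolding u_def E_def
      by (subst (1 2) mk_eta[of A1], subst (1 2) mk_eta[of B]) (simp add: mk_one algebra_simps)
    from bound_I[OF K \<eta>_def E] have bI: "0 \<le> t" "2 - t < 1/100" "u 0 ^2 + u 1 ^2 - t * u 0 * u 1 < 1/100"
      unfolding t_eq[symmetric] u1 u0 by auto
    have t2: "t < 2" using B(2) t_def by simp
    have d1h: "det (\<rho>1 h) = 1" "det (\<rho>2 h) = 1" using rho_det[OF grp h1 h(1)] rho_det[OF grp h2 h(1)] by auto
    have rh: "(\<bar>trc (\<rho>1 h)\<bar> < 2 \<longleftrightarrow> \<bar>trc (\<rho>2 h)\<bar> < 2) \<and> (\<bar>trc (\<rho>1 h)\<bar> < 2 \<longrightarrow> trc (\<rho>1 h) ^2 = trc (\<rho>2 h) ^2)"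
      using rot_cmp'[OF d1h] rot h(1) by simp
    have "\<bar>trc (\<rho>1 h)\<bar> = \<bar>t\<bar>" using psl_eq_abs_trc[OF h(2)] t_def by simp
    then have "\<bar>trc (\<rho>2 h)\<bar> = \<bar>t\<bar>" using rh B(2) t_def by (metis sq_eq_abs)
    then obtain B2 where B2: "psl_eq B2 (\<rho>2 h)" "trc B2 = t"
    proof (cases "trc (\<rho>2 h) = t")
      case True then show ?thesis using that[of "\<rho>2 h"] by simp
    next
      case False
      then have "trc (\<rho>2 h) = - t" using \<open>\<bar>trc (\<rho>2 h)\<bar> = \<bar>t\<bar>\<close> by (auto simp: abs_if split: if_splits)
      then show ?thesis using that[of "- \<rho>2 h"] by (simp add: psl_eq_def)
    qed
    have dB2: "det B2 = 1" using psl_eq_det[OF B2(1)] d1h by simp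
    define v where "v k = trc (A2 ** mpow B2 k)" for k
    have ru: "\<And>k. u (Suc (Suc k)) = t * u (Suc k) - u k" unfolding u_def t_def using mpow_rec[OF dB] by simp
    have rv: "\<And>k. v (Suc (Suc k)) = t * v (Suc k) - v k" unfolding v_def B2(2)[symmetric] using mpow_rec[OF dB2] by simp
    have H: "u k ^2 = v k ^2" if uk: "\<bar>u k\<bar> < 2" for k
    proof -
      define x where "x = \<gamma> \<otimes>\<^bsub>G\<^esub> h [^]\<^bsub>G\<^esub> k"
      have x: "x \<in> carrier G" unfolding x_def using g h by simp
      have p1: "psl_eq (\<rho>1 x) (A1 ** mpow B k)"
      proof -
        have "psl_eq (\<rho>1 x) (A1 ** mpow (\<rho>1 h) k)" unfolding x_def A1_A2_def by (rule rho_pow[OF grp h1 g h(1)])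
        moreover have "psl_eq (A1 ** mpow (\<rho>1 h) k) (A1 ** mpow B k)"
          by (intro psl_eq_multL mpow_psl psl_eq_sym[OF h(2)])
        ultimately show ?thesis by (rule psl_eq_trans)
      qed
      have p2: "psl_eq (\<rho>2 x) (A2 ** mpow B2 k)"
      proof -
        have "psl_eq (\<rho>2 x) (A2 ** mpow (\<rho>2 h) k)" unfolding x_def A1_A2_def by (rule rho_pow[OF grp h2 g h(1)])
        moreover have "psl_eq (A2 ** mpow (\<rho>2 h) k) (A2 ** mpow B2 k)"
          by (intro psl_eq_multL mpow_psl psl_eq_sym[OF B2(1)])
        ultimately show ?thesis by (rule psl_eq_trans)
      qed
      have a1: "\<bar>trc (\<rho>1 x)\<bar> = \<bar>u k\<bar>" using psl_eq_abs_trc[OF p1] u_def by simp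
      have a2: "\<bar>trc (\<rho>2 x)\<bar> = \<bar>v k\<bar>" using psl_eq_abs_trc[OF p2] v_def by simp
      have dx: "det (\<rho>1 x) = 1" "det (\<rho>2 x) = 1" using rho_det[OF grp h1 x] rho_det[OF grp h2 x] by auto
      have "trc (\<rho>1 x) ^2 = trc (\<rho>2 x) ^2" using rot_cmp'[OF dx] rot x a1 uk by simp
      then show ?thesis using a1 a2 by (metis sq_eq_abs)
    qed
    have u0': "\<bar>u 0\<bar> \<ge> 2" using False u0 by (simp add: trc_def)
    have "u 0 ^2 = v 0 ^2" by (rule rec_main[where u=u and v=v and t=t, OF ru rv bI(1) t2 bI(2) bI(3) u0' H])
    moreover have "u 0 = trc A1" "v 0 = trc A2" unfolding u_def v_def by simp_all
    ultimately show ?thesis using A1_A2_def by (simp add: abs_tr_trc sq_eq_abs)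
  qed
qed


definition mv :: "real^2^2 \<Rightarrow> real \<times> real \<Rightarrow> real \<times> real" where
  "mv M v = (M$1$1 * fst v + M$1$2 * snd v, M$2$1 * fst v + M$2$2 * snd v)"

definition pt :: "real \<times> real \<Rightarrow> complex option" where
  "pt v = (if snd v = 0 then None else Some (complex_of_real (fst v / snd v)))"

lemma mv_mk[simp]: "mv (mk a b c d) (x, y) = (a*x + b*y, c*x + d*y)" by (simp add: mv_def)

lemma mv_mult: "mv (A ** B) v = mv A (mv B v)"
  by (subst mk_eta[of A], subst mk_eta[of B], cases v) (simp add: mv_def algebra_simps)

lemma mv_one[simp]: "mv (mat 1) v = v" by (cases v) (simp add: mk_one)

lemma mv_nz: "det A = 1 \<Longrightarrow> v \<noteq> (0,0) \<Longrightarrow> mv A v \<noteq> (0,0)"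
proof
  assume d: "det A = 1" and v: "v \<noteq> (0,0)" and m: "mv A v = (0,0)"
  have "mv (adj A ** A) v = mv (adj A) (0,0)" using m by (simp add: mv_mult)
  also have "\<dots> = (0,0)" by (simp add: mv_def)
  finally show False using adj_left[OF d] v by simp
qed

lemma pt_closed: "pt v \<in> closed_H2"
  by (auto simp: pt_def closed_H2_def)

lemma mob_pt: "v \<noteq> (0,0) \<Longrightarrow> mob M (pt v) = pt (mv M v)"
proof -
  assume v: "v \<noteq> (0,0)"
  obtain x y where xy: "v = (x,y)" by (cases v)
  define a b c d where "a = M$1$1" "b = M$1$2" "c = M$2$1" "d = M$2$2"
  show ?thesis
  proof (cases "y = 0")
    case True
    then have x: "x \<noteq> 0" using v xy by simp
    show ?thesis using True x unfolding xy mob_def pt_def mv_def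
      by (simp add: a_b_c_d_def[symmetric] Let_def)
  next
    case False
    have e1: "complex_of_real c * complex_of_real (x / y) + complex_of_real d = complex_of_real ((c*x + d*y)/y)"
      using False by (simp add: field_simps)
    have e2: "complex_of_real a * complex_of_real (x / y) + complex_of_real b = complex_of_real ((a*x + b*y)/y)"
      using False by (simp add: field_simps)
    have e3: "((a*x+b*y)/y) / ((c*x+d*y)/y) = (a*x+b*y)/(c*x+d*y)" using False by simp
    have e4: "complex_of_real ((a*x+b*y)/y) / complex_of_real ((c*x+d*y)/y) = complex_of_real ((a*x+b*y)/(c*x+d*y))"
      by (simp only: of_real_divide[symmetric] e3)
    show ?thesis using False unfolding xy mob_def pt_def mv_def Let_def a_b_c_d_def[symmetric]
      by (simp add: e1 e2 e4 del: of_real_add of_real_mult of_real_divide)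
  qed
qed

lemma pt_par:
  assumes "v \<noteq> (0,0)" "w \<noteq> (0,0)" "fst v * snd w = snd v * fst w" shows "pt v = pt w"
proof -
  obtain v1 v2 w1 w2 where vw: "v = (v1,v2)" "w = (w1,w2)" by (cases v, cases w)
  have e: "v1 * w2 = v2 * w1" using assms vw by simp
  show ?thesis
  proof (cases "v2 = 0")
    case True
    then have "v1 \<noteq> 0" using assms vw by simp
    then have "w2 = 0" using e True by simp
    then show ?thesis using True vw by (simp add: pt_def)
  next
    case False
    have "w2 \<noteq> 0"
    proof
      assume "w2 = 0" then have "w1 = 0" using e False by simp
      then show False using assms vw \<open>w2 = 0\<close> by simp
    qed
    then have "v1 / v2 = w1 / w2" using False e by (simp add: field_simps)
    then show ?thesis using False \<open>w2 \<noteq> 0\<close> vw by (simp add: pt_def)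
  qed
qed

lemma ker_par:
  assumes "N \<noteq> mk 0 0 0 0" "mv N v = (0,0)" "mv N w = (0,0)"
  shows "fst v * snd w = snd v * fst w"
proof -
  obtain v1 v2 w1 w2 where vw: "v = (v1,v2)" "w = (w1,w2)" by (cases v, cases w)
  have ne: "N$1$1 \<noteq> 0 \<or> N$1$2 \<noteq> 0 \<or> N$2$1 \<noteq> 0 \<or> N$2$2 \<noteq> 0"
    using assms(1) mk_eta[of N] by auto
  have r: "N$1$1 * v1 + N$1$2 * v2 = 0" "N$2$1 * v1 + N$2$2 * v2 = 0"
          "N$1$1 * w1 + N$1$2 * w2 = 0" "N$2$1 * w1 + N$2$2 * w2 = 0"
    using assms(2,3) vw by (simp_all add: mv_def)
  have q: "N$1$1 * v1 = - (N$1$2 * v2)" "N$2$1 * v1 = - (N$2$2 * v2)"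
          "N$1$1 * w1 = - (N$1$2 * w2)" "N$2$1 * w1 = - (N$2$2 * w2)" using r by linarith+
  have "N$1$1 * (v1*w2 - v2*w1) = (N$1$1 * v1) * w2 - (N$1$1 * w1) * v2" by (simp add: algebra_simps)
  also have "\<dots> = 0" unfolding q by (simp add: algebra_simps)
  finally have 1: "N$1$1 * (v1*w2 - v2*w1) = 0" .
  have "N$2$1 * (v1*w2 - v2*w1) = (N$2$1 * v1) * w2 - (N$2$1 * w1) * v2" by (simp add: algebra_simps)
  also have "\<dots> = 0" unfolding q by (simp add: algebra_simps)
  finally have 2: "N$2$1 * (v1*w2 - v2*w1) = 0" .
  have "N$1$2 * (v1*w2 - v2*w1) = 0"
  proof (cases "N$1$1 = 0")
    case True
    then have a: "N$1$2 * v2 = 0" "N$1$2 * w2 = 0" using r by auto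
    have "N$1$2 * (v1*w2 - v2*w1) = v1*(N$1$2 * w2) - w1*(N$1$2 * v2)" by (simp add: algebra_simps)
    then show ?thesis using a by simp
  next
    case False then show ?thesis using 1 by simp
  qed
  moreover have "N$2$2 * (v1*w2 - v2*w1) = 0"
  proof (cases "N$2$1 = 0")
    case True
    then have a: "N$2$2 * v2 = 0" "N$2$2 * w2 = 0" using r by auto
    have "N$2$2 * (v1*w2 - v2*w1) = v1*(N$2$2 * w2) - w1*(N$2$2 * v2)" by (simp add: algebra_simps)
    then show ?thesis using a by simp
  next
    case False then show ?thesis using 2 by simp
  qed
  moreover note 1 2
  ultimately have "v1*w2 - v2*w1 = 0" using ne by auto
  then show ?thesis using vw by simp
qed

lemma ker_ex:
  assumes "det N = 0" shows "\<exists>v. v \<noteq> (0,0) \<and> mv N v = (0,0)"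
proof (cases "N$1$1 = 0 \<and> N$1$2 = 0")
  case False
  show ?thesis
    by (rule exI[of _ "(- N$1$2, N$1$1)"]) (use False assms det_2[of N] in \<open>auto simp: mv_def algebra_simps\<close>)
next
  case True
  show ?thesis
  proof (cases "N$2$1 = 0 \<and> N$2$2 = 0")
    case True2: True
    show ?thesis by (rule exI[of _ "(1, 0)"]) (use True True2 in \<open>simp add: mv_def\<close>)
  next
    case False
    show ?thesis
      by (rule exI[of _ "(- N$2$2, N$2$1)"]) (use True False in \<open>auto simp: mv_def algebra_simps\<close>)
  qed
qed

context fixes A B C M X W S :: "real^2^2" begin

lemma mm_add_right: "A ** (B + C) = A ** B + A ** C"
  by (subst (1 2 3) mk_eta[of A], subst (1 2) mk_eta[of B], subst (1 2) mk_eta[of C]) (simp add: algebra_simps)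
lemma mm_add_left: "(A + B) ** C = A ** C + B ** C"
  by (subst (1 2) mk_eta[of A], subst (1 2) mk_eta[of B], subst (1 2 3) mk_eta[of C]) (simp add: algebra_simps)
lemma mm_diff_left: "(A - B) ** C = A ** C - B ** C"
  by (subst (1 2) mk_eta[of A], subst (1 2) mk_eta[of B], subst (1 2 3) mk_eta[of C]) (simp add: algebra_simps)
lemma mm_scaleR_left: "(x *\<^sub>R A) ** B = x *\<^sub>R (A ** B)"
  by (subst (1 2) mk_eta[of A], subst (1 2) mk_eta[of B]) (simp add: algebra_simps)
lemma cayley_gen: "M ** M = trc M *\<^sub>R M - det M *\<^sub>R mat 1"
  by (subst (1 2 3 4 5) mk_eta[of M]) (simp add: mk_one algebra_simps power2_eq_square)
lemma det_tl_sum: "trc X = 0 \<Longrightarrow> trc W = 0 \<Longrightarrow> det (X + W) = det X + det W - trc (X ** W)"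
proof -
  obtain a b c d where X: "X = mk a b c d" using mk_eta by blast
  obtain a' b' c' d' where W: "W = mk a' b' c' d'" using mk_eta by blast
  assume "trc X = 0" "trc W = 0"
  then have "d = -a" "d' = -a'" unfolding X W by simp_all
  then show ?thesis unfolding X W by (simp add: algebra_simps)
qed
lemma trc_conj: "det S = 1 \<Longrightarrow> trc (S ** X ** adj S) = trc X"
proof -
  obtain a b c d where X: "X = mk a b c d" using mk_eta by blast
  obtain p q r u where S: "S = mk p q r u" using mk_eta by blast
  assume "det S = 1"
  then have e: "p*u - q*r = 1" unfolding S by simp
  have "trc (S ** X ** adj S) = (p*u - q*r) * (a + d)" unfolding X S by (simp add: algebra_simps)
  then show ?thesis using e X by simp
qed
lemma det_conj: "det S = 1 \<Longrightarrow> det (S ** X ** adj S) = det X"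
  by (simp add: det_mult)
lemma det_scaleR2: "det (x *\<^sub>R X) = x^2 * det X"
  by (subst (1 2) mk_eta[of X]) (simp add: algebra_simps power2_eq_square)
lemma trc_scaleR: "trc (x *\<^sub>R X) = x * trc X"
  by (subst (1 2) mk_eta[of X]) (simp add: algebra_simps)
lemma trc_diff: "trc (X - W) = trc X - trc W"
  by (simp add: trc_def)
lemma mv_diff: "mv (A - B) v = (fst (mv A v) - fst (mv B v), snd (mv A v) - snd (mv B v))"
  by (simp add: mv_def algebra_simps)
lemma mv_add: "mv (A + B) v = (fst (mv A v) + fst (mv B v), snd (mv A v) + snd (mv B v))"
  by (simp add: mv_def algebra_simps)
lemma mv_scaleR: "mv (x *\<^sub>R A) v = (x * fst (mv A v), x * snd (mv A v))"
  by (simp add: mv_def algebra_simps)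
lemma mv_zero: "mv A (0,0) = (0,0)" by (simp add: mv_def)
lemma mv_neg: "mv (- A) v = (- fst (mv A v), - snd (mv A v))" by (simp add: mv_def)
lemma mat0: "mk 0 0 0 0 = 0" unfolding vec_eq_iff forall_2 by simp

end

definition gS :: "real^2^2 \<Rightarrow> real^2^2 \<Rightarrow> real" where
  "gS S X = (trc (X ** (S ** X ** adj S)) / 2)^2 - (det X)^2"

definition EV :: "real^2^2 \<Rightarrow> (real \<times> real) set" where
  "EV X = {v. v \<noteq> (0,0) \<and> (\<exists>\<mu>. mv X v = (\<mu> * fst v, \<mu> * snd v))}"

lemma tl_sq: "trc X = 0 \<Longrightarrow> X ** X = (- det X) *\<^sub>R mat 1"
  using cayley_gen[of X] by simp

lemma par_eig: "(w::real\<times>real) \<noteq> (0,0) \<Longrightarrow> fst w * snd z = snd w * fst z \<Longrightarrow> \<exists>\<kappa>. z = (\<kappa> * fst w, \<kappa> * snd w)"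
proof -
  assume w: "w \<noteq> (0,0)" and e: "fst w * snd z = snd w * fst z"
  obtain w1 w2 z1 z2 where wz: "w = (w1,w2)" "z = (z1,z2)" by (cases w, cases z)
  show ?thesis
  proof (cases "w1 = 0")
    case True
    then have "w2 \<noteq> 0" using w wz by simp
    then have "w2 * z1 = 0" using e wz True by simp
    then have "z1 = 0" using \<open>w2 \<noteq> 0\<close> by simp
    then show ?thesis using wz True \<open>w2 \<noteq> 0\<close> by (intro exI[of _ "z2/w2"]) simp
  next
    case False
    then have "z2 = z1 / w1 * w2" using e wz by (simp add: field_simps)
    then show ?thesis using wz False by (intro exI[of _ "z1/w1"]) simp
  qed
qed


lemma deg_step:
  assumes dS: "det S = 1" and tX: "trc X = 0" and g0: "gS S X = 0" and v0: "v0 \<in> EV X"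
  shows "\<exists>v\<in>EV X. mv S v \<in> EV X \<or> mv (adj S) v \<in> EV X"
proof -
  define X' where "X' = S ** X ** adj S"
  define B where "B = trc (X ** X') / 2"
  define qq where "qq = - det X"
  have "B^2 = qq^2" using g0 unfolding gS_def B_def qq_def X'_def by simp
  then obtain \<epsilon> :: real where eps: "\<epsilon> = 1 \<or> \<epsilon> = -1" "B = \<epsilon> * qq"
    by (metis power2_eq_iff mult_1 mult_minus1)
  have e2: "\<epsilon> * \<epsilon> = 1" using eps by auto
  define Xe where "Xe = \<epsilon> *\<^sub>R X'"
  define Y where "Y = X - Xe"
  have tX': "trc X' = 0" unfolding X'_def using trc_conj[OF dS] tX by simp
  have dX': "det X' = det X" unfolding X'_def using det_conj[OF dS] .
  have tXe: "trc Xe = 0" unfolding Xe_def trc_scaleR tX' by simp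
  have dXe: "det Xe = det X" unfolding Xe_def det_scaleR2 dX' using e2 by (simp add: power2_eq_square)
  have tY: "trc Y = 0" unfolding Y_def trc_diff tX tXe by simp
  have dY: "det Y = 0"
  proof -
    have "trc (- Xe) = 0" using tXe by simp
    from det_tl_sum[OF tX this] have "det Y = det X + det (- Xe) - trc (X ** (- Xe))" unfolding Y_def by simp
    also have "\<dots> = det X + det X + \<epsilon> * trc (X ** X')"
      using dXe by (simp add: mm_rneg Xe_def mm_scaleR_right trc_scaleR)
    also have "\<dots> = 0" using eps(2) e2 unfolding B_def qq_def by (simp add: algebra_simps)
    finally show ?thesis .
  qed
  have XX: "X ** X = qq *\<^sub>R mat 1" using tl_sq[OF tX] qq_def by simp
  have XeXe: "Xe ** Xe = qq *\<^sub>R mat 1" using tl_sq[OF tXe] qq_def dXe by simp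
  have YY: "Y ** Y = 0" using tl_sq[OF tY] dY by simp
  have anti: "X ** Y + Y ** X = 0"
  proof -
    have "Xe = X - Y" unfolding Y_def by simp
    then have "Xe ** Xe = (X - Y) ** (X - Y)" by simp
    also have "\<dots> = X ** X - X ** Y - Y ** X + Y ** Y"
      by (simp add: mm_diff_right mm_diff_left algebra_simps)
    finally have "Xe ** Xe = X ** X - X ** Y - Y ** X + Y ** Y" .
    then show ?thesis using XX XeXe YY by (simp add: algebra_simps)
  qed
  show ?thesis
  proof (cases "Y = 0")
    case True
    then have XeX: "Xe = X" unfolding Y_def by simp
    have "X ** S = \<epsilon> *\<^sub>R (S ** X)"
    proof -
      have "X ** S = Xe ** S" using XeX by simp
      also have "\<dots> = \<epsilon> *\<^sub>R (S ** X ** (adj S ** S))" unfolding Xe_def X'_def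
        by (simp add: mm_scaleR_left matrix_mul_assoc)
      also have "\<dots> = \<epsilon> *\<^sub>R (S ** X)" using adj_left[OF dS] by simp
      finally show ?thesis .
    qed
    obtain \<mu> where mu: "mv X v0 = (\<mu> * fst v0, \<mu> * snd v0)" "v0 \<noteq> (0,0)" using v0 by (auto simp: EV_def)
    have "mv X (mv S v0) = mv (X ** S) v0" by (simp add: mv_mult)
    also have "\<dots> = (\<epsilon> * fst (mv S (mv X v0)), \<epsilon> * snd (mv S (mv X v0)))"
      unfolding \<open>X ** S = \<epsilon> *\<^sub>R (S ** X)\<close> mv_scaleR mv_mult ..
    also have "\<dots> = ((\<epsilon>*\<mu>) * fst (mv S v0), (\<epsilon>*\<mu>) * snd (mv S v0))"
      unfolding mu(1) by (simp add: mv_def algebra_simps)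
    finally have "mv S v0 \<in> EV X" using mv_nz[OF dS mu(2)] unfolding EV_def by blast
    then show ?thesis using v0 by blast
  next
    case False
    obtain w where w: "w \<noteq> (0,0)" "mv Y w = (0,0)" using ker_ex[OF dY] by blast
    have "mv Y (mv X w) = mv (Y ** X) w" by (simp add: mv_mult)
    also have "Y ** X = - (X ** Y)" using anti by (simp add: eq_neg_iff_add_eq_0 add.commute)
    also have "mv (- (X ** Y)) w = (0,0)" using w(2) by (simp add: mv_neg mv_mult mv_zero)
    finally have Yx: "mv Y (mv X w) = (0,0)" .
    have Y0: "Y \<noteq> mk 0 0 0 0" using False mat0 by simp
    obtain \<kappa> where ka: "mv X w = (\<kappa> * fst w, \<kappa> * snd w)"
      using par_eig[OF w(1) ker_par[OF Y0 w(2) Yx]] by blast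
    have wE: "w \<in> EV X" using w ka unfolding EV_def by blast
    have Xew: "mv Xe w = (\<kappa> * fst w, \<kappa> * snd w)"
    proof -
      have "Xe = X - Y" unfolding Y_def by simp
      then show ?thesis using ka w(2) by (simp add: mv_diff)
    qed
    have XadjS: "X ** adj S = \<epsilon> *\<^sub>R (adj S ** Xe)"
    proof -
      have "adj S ** Xe = \<epsilon> *\<^sub>R ((adj S ** S) ** X ** adj S)" unfolding Xe_def X'_def
        by (simp add: mm_scaleR_right matrix_mul_assoc)
      also have "\<dots> = \<epsilon> *\<^sub>R (X ** adj S)" using adj_left[OF dS] by simp
      finally have "\<epsilon> *\<^sub>R (adj S ** Xe) = (\<epsilon> * \<epsilon>) *\<^sub>R (X ** adj S)" by simp
      then show ?thesis using e2 by simp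
    qed
    have "mv X (mv (adj S) w) = mv (X ** adj S) w" by (simp add: mv_mult)
    also have "\<dots> = (\<epsilon> * fst (mv (adj S) (mv Xe w)), \<epsilon> * snd (mv (adj S) (mv Xe w)))"
      unfolding XadjS mv_scaleR mv_mult ..
    also have "\<dots> = ((\<epsilon>*\<kappa>) * fst (mv (adj S) w), (\<epsilon>*\<kappa>) * snd (mv (adj S) w))"
      unfolding Xew by (simp add: mv_def algebra_simps)
    finally have "mv (adj S) w \<in> EV X" using mv_nz[of "adj S", OF _ w(1)] dS unfolding EV_def by auto
    then show ?thesis using wE by blast
  qed
qed


definition Qpts :: "complex option set" where "Qpts = pt ` {v. v \<noteq> (0,0)}"

lemma Q_mob: "det S = 1 \<Longrightarrow> p \<in> Qpts \<Longrightarrow> mob S p \<in> Qpts"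
proof -
  assume dS: "det S = 1" and p: "p \<in> Qpts"
  then obtain v where v: "v \<noteq> (0,0)" "p = pt v" unfolding Qpts_def by blast
  have "mob S p = pt (mv S v)" using v mob_pt by simp
  moreover have "mv S v \<noteq> (0,0)" using mv_nz[OF dS v(1)] .
  ultimately show ?thesis unfolding Qpts_def by blast
qed

lemma Q_comp: "det R = 1 \<Longrightarrow> p \<in> Qpts \<Longrightarrow> mob (S ** R) p = mob S (mob R p)"
proof -
  assume dR: "det R = 1" and p: "p \<in> Qpts"
  then obtain v where v: "v \<noteq> (0,0)" "p = pt v" unfolding Qpts_def by blast
  have "mob (S ** R) p = pt (mv S (mv R v))" using v mob_pt[OF v(1), of "S ** R"] mv_mult by simp
  also have "\<dots> = mob S (mob R p)" using v mob_pt[OF v(1), of R] mob_pt[OF mv_nz[OF dR v(1)], of S] by simp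
  finally show ?thesis .
qed

lemma Q_id: "p \<in> Qpts \<Longrightarrow> mob (mat 1) p = p"
proof -
  assume p: "p \<in> Qpts"
  then obtain v where v: "v \<noteq> (0,0)" "p = pt v" unfolding Qpts_def by blast
  then show ?thesis using mob_pt[OF v(1), of "mat 1"] by simp
qed

lemma Q_inv1: "det S = 1 \<Longrightarrow> p \<in> Qpts \<Longrightarrow> mob (adj S) (mob S p) = p"
proof -
  assume "det S = 1" "p \<in> Qpts"
  then have "mob (adj S ** S) p = mob (adj S) (mob S p)" by (rule Q_comp)
  then show ?thesis using adj_left[OF \<open>det S = 1\<close>] Q_id[OF \<open>p \<in> Qpts\<close>] by simp
qed

lemma Q_inv2: "det S = 1 \<Longrightarrow> p \<in> Qpts \<Longrightarrow> mob S (mob (adj S) p) = p"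
proof -
  assume "det S = 1" "p \<in> Qpts"
  then have "det (adj S) = 1" by simp
  then have "mob (S ** adj S) p = mob S (mob (adj S) p)" using \<open>p \<in> Qpts\<close> by (rule Q_comp)
  then show ?thesis using adj_right[OF \<open>det S = 1\<close>] Q_id[OF \<open>p \<in> Qpts\<close>] by simp
qed

lemma orbit2:
  fixes P :: "(real^2^2) set"
  assumes Pdet: "\<And>S. S \<in> P \<Longrightarrow> det S = 1"
    and Pmul: "\<And>S R. S \<in> P \<Longrightarrow> R \<in> P \<Longrightarrow> S ** R \<in> P"
    and Padj: "\<And>S. S \<in> P \<Longrightarrow> adj S \<in> P"
    and a: "a \<in> Qpts" and b: "b \<in> Qpts"
    and H: "\<And>S. S \<in> P \<Longrightarrow> mob S a \<in> {a,b} \<or> mob S b \<in> {a,b}"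
  shows "finite ((\<lambda>S. mob S a) ` P) \<or> finite ((\<lambda>S. mob S b) ` P)"
proof (cases "\<forall>S\<in>P. mob S a \<in> {a,b}")
  case True
  then have "(\<lambda>S. mob S a) ` P \<subseteq> {a,b}" by auto
  then show ?thesis using finite_subset by blast
next
  case False
  then obtain x where x: "x \<in> P" "mob x a \<notin> {a,b}" by blast
  have dx: "det x = 1" using Pdet x by simp
  define g0 where "g0 = (SOME g. g \<in> P \<and> mob g a = b)"
  define Z where "Z = {a, b, mob (adj x) a, mob (adj x) b, mob g0 (mob (adj x) a), mob g0 (mob (adj x) b)}"
  have "mob S b \<in> Z" if S: "S \<in> P" for S
  proof -
    have dS: "det S = 1" using Pdet S by simp
    show ?thesis
    proof (cases "mob S b \<in> {a,b}")
      case True then show ?thesis unfolding Z_def by auto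
    next
      case False
      then have Sa: "mob S a \<in> {a,b}" using H S by blast
      have Sb: "mob S b \<in> Qpts" using Q_mob[OF dS b] .
      show ?thesis
      proof (cases "mob S a = a")
        case True
        define W where "W = x ** S"
        have W: "W \<in> P" "det W = 1" unfolding W_def using Pmul x S Pdet by auto
        have "mob W a = mob x a" unfolding W_def using Q_comp[OF dS a] True by simp
        then have Wb: "mob W b \<in> {a,b}" using H[OF W(1)] x by auto
        have "mob S b = mob (adj x) (mob x (mob S b))" using Q_inv1[OF dx Sb] by simp
        also have "\<dots> = mob (adj x) (mob W b)" unfolding W_def using Q_comp[OF dS b] by simp
        finally show ?thesis using Wb unfolding Z_def by auto
      next
        case False
        then have Sab: "mob S a = b" using Sa by auto
        have "\<exists>g. g \<in> P \<and> mob g a = b" using S Sab by blast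
        then have g0: "g0 \<in> P" "mob g0 a = b" unfolding g0_def by (metis (mono_tags, lifting) someI_ex)+
        have dg: "det g0 = 1" using Pdet g0 by simp
        define W where "W = x ** (adj g0 ** S)"
        have dag: "det (adj g0 ** S) = 1" using dg dS by (simp add: det_mult)
        have W: "W \<in> P" unfolding W_def using Pmul Padj x S g0 by auto
        have "mob W a = mob x (mob (adj g0) (mob S a))"
          unfolding W_def using Q_comp[OF dag a] Q_comp[OF dS a] by simp
        also have "\<dots> = mob x a" using Sab g0(2) Q_inv1[OF dg a] by simp
        finally have Wb: "mob W b \<in> {a,b}" using H[OF W] x by auto
        have Sb': "mob (adj g0) (mob S b) \<in> Qpts" using Q_mob[OF _ Sb] dg by simp
        have "mob S b = mob g0 (mob (adj g0) (mob S b))" using Q_inv2[OF dg Sb] by simp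
        also have "\<dots> = mob g0 (mob (adj x) (mob x (mob (adj g0) (mob S b))))" using Q_inv1[OF dx Sb'] by simp
        also have "mob x (mob (adj g0) (mob S b)) = mob W b"
          unfolding W_def using Q_comp[OF dag b] Q_comp[OF dS b] by simp
        finally show ?thesis using Wb unfolding Z_def by auto
      qed
    qed
  qed
  then have "(\<lambda>S. mob S b) ` P \<subseteq> Z" by auto
  moreover have "finite Z" unfolding Z_def by simp
  ultimately show ?thesis using finite_subset by blast
qed


lemma eig_ker:
  assumes "mv X v = (\<mu> * fst v, \<mu> * snd v)" shows "mv (X - \<mu> *\<^sub>R mat 1) v = (0,0)"
  using assms by (cases v) (simp add: mv_def mk_one algebra_simps)

lemma ker_eig:
  assumes "mv (X - \<mu> *\<^sub>R mat 1) v = (0,0)" shows "mv X v = (\<mu> * fst v, \<mu> * snd v)"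
  using assms by (cases v) (simp add: mv_def mk_one algebra_simps)

lemma nondeg:
  fixes G :: "('g, 'z) monoid_scheme" and \<rho> :: "'g \<Rightarrow> real^2^2"
  assumes grp: "group G" and hom: "psl_hom G \<rho>" and nel: "\<not> elementary G \<rho>"
    and tX: "trc X = 0" and X0: "X \<noteq> mk 0 0 0 0" and dX: "det X \<le> 0"
  shows "\<exists>S\<in>psl_image G \<rho>. gS S X \<noteq> 0"
proof (rule ccontr)
  assume "\<not> ?thesis"
  then have allz: "\<And>S. S \<in> psl_image G \<rho> \<Longrightarrow> gS S X = 0" by blast
  define qq where "qq = - det X"
  define \<sigma> where "\<sigma> = sqrt qq"
  have qq0: "qq \<ge> 0" using dX qq_def by simp
  have s2: "\<sigma>^2 = qq" using qq0 \<sigma>_def by simp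
  obtain x y z where Xm: "X = mk x y z (-x)"
  proof -
    have e: "X$2$2 = - X$1$1" using tX by (simp add: trc_def eq_neg_iff_add_eq_0 add.commute)
    have "X = mk (X$1$1) (X$1$2) (X$2$1) (X$2$2)" by (rule mk_eta)
    then have "X = mk (X$1$1) (X$1$2) (X$2$1) (- X$1$1)" unfolding e .
    then show ?thesis using that by blast
  qed
  have dXm: "det X = - (x*x) - y*z" unfolding Xm by (simp add: power2_eq_square)
  define Np where "Np = X - \<sigma> *\<^sub>R mat 1"
  define Nm where "Nm = X - (- \<sigma>) *\<^sub>R mat 1"
  have dNp: "det Np = 0" unfolding Np_def Xm using s2 qq_def dXm by (simp add: mk_one power2_eq_square algebra_simps)
  have dNm: "det Nm = 0" unfolding Nm_def Xm using s2 qq_def dXm by (simp add: mk_one power2_eq_square algebra_simps)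
  have Np0: "Np \<noteq> mk 0 0 0 0"
  proof
    assume "Np = mk 0 0 0 0"
    then have "x = \<sigma>" "-x = \<sigma>" "y = 0" "z = 0" unfolding Np_def Xm by (simp_all add: mk_one)
    then show False using X0 Xm by simp
  qed
  have Nm0: "Nm \<noteq> mk 0 0 0 0"
  proof
    assume "Nm = mk 0 0 0 0"
    then have "x = -\<sigma>" "-x = -\<sigma>" "y = 0" "z = 0" unfolding Nm_def Xm by (simp_all add: mk_one)
    then show False using X0 Xm by simp
  qed
  obtain kp where kp: "kp \<noteq> (0,0)" "mv Np kp = (0,0)" using ker_ex[OF dNp] by blast
  obtain km where km: "km \<noteq> (0,0)" "mv Nm km = (0,0)" using ker_ex[OF dNm] by blast
  have kpE: "kp \<in> EV X" using kp ker_eig[of X \<sigma> kp] Np_def unfolding EV_def by blast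
  define a b where "a = pt kp" "b = pt km"
  have aQ: "a \<in> Qpts" and bQ: "b \<in> Qpts" unfolding a_b_def Qpts_def using kp km by auto
  have XX: "X ** X = qq *\<^sub>R mat 1" using tl_sq[OF tX] qq_def by simp
  have EVpt: "pt v \<in> {a,b}" if v: "v \<in> EV X" for v
  proof -
    obtain \<mu> where mu: "mv X v = (\<mu> * fst v, \<mu> * snd v)" and v0: "v \<noteq> (0,0)" using v unfolding EV_def by blast
    have "mv (X ** X) v = mv X (\<mu> * fst v, \<mu> * snd v)" unfolding mv_mult mu ..
    also have "\<dots> = (\<mu> * fst (mv X v), \<mu> * snd (mv X v))" by (simp add: mv_def algebra_simps)
    also have "\<dots> = (\<mu> * \<mu> * fst v, \<mu> * \<mu> * snd v)" using mu by simp
    finally have "mv (X ** X) v = (\<mu> * \<mu> * fst v, \<mu> * \<mu> * snd v)" .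
    moreover have "mv (X ** X) v = (qq * fst v, qq * snd v)" unfolding XX by (simp add: mv_scaleR)
    ultimately have "(\<mu> * \<mu> * fst v, \<mu> * \<mu> * snd v) = (qq * fst v, qq * snd v)" by (rule trans[OF sym])
    then have e: "\<mu> * \<mu> * fst v = qq * fst v" "\<mu> * \<mu> * snd v = qq * snd v" by (simp_all only: prod.inject)
    then have "(\<mu> * \<mu> - qq) * fst v = 0" "(\<mu> * \<mu> - qq) * snd v = 0" by (simp_all add: left_diff_distrib)
    then have "\<mu> * \<mu> = qq" using v0 by (cases v) auto
    then have "\<mu>^2 = \<sigma>^2" using s2 by (simp add: power2_eq_square)
    then have "\<mu> = \<sigma> \<or> \<mu> = - \<sigma>" by (simp add: power2_eq_iff)
    then show ?thesis
    proof
      assume "\<mu> = \<sigma>"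
      then have "mv Np v = (0,0)" using eig_ker[OF mu] Np_def by simp
      then have "pt v = a" unfolding a_b_def using pt_par[OF v0 kp(1) ker_par[OF Np0 _ kp(2)]] by simp
      then show ?thesis by simp
    next
      assume "\<mu> = - \<sigma>"
      then have "mv Nm v = (0,0)" using eig_ker[OF mu] Nm_def by simp
      then have "pt v = b" unfolding a_b_def using pt_par[OF v0 km(1) ker_par[OF Nm0 _ km(2)]] by simp
      then show ?thesis by simp
    qed
  qed
  let ?P = "psl_image G \<rho>"
  have H: "mob S a \<in> {a,b} \<or> mob S b \<in> {a,b}" if S: "S \<in> ?P" for S
  proof -
    have dS: "det S = 1" using img_det[OF grp hom S] .
    obtain v where v: "v \<in> EV X" and vv: "mv S v \<in> EV X \<or> mv (adj S) v \<in> EV X"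
      using deg_step[OF dS tX allz[OF S] kpE] by blast
    have v0: "v \<noteq> (0,0)" using v EV_def by simp
    have pv: "pt v \<in> {a,b}" using EVpt v by simp
    have pQ: "pt v \<in> Qpts" using v0 Qpts_def by blast
    from vv show ?thesis
    proof
      assume "mv S v \<in> EV X"
      then have "mob S (pt v) \<in> {a,b}" using EVpt mob_pt[OF v0] by simp
      then show ?thesis using pv by auto
    next
      assume "mv (adj S) v \<in> EV X"
      then have p': "mob (adj S) (pt v) \<in> {a,b}" using EVpt mob_pt[OF v0] by simp
      have "mob S (mob (adj S) (pt v)) = pt v" using Q_inv2[OF dS pQ] .
      then show ?thesis using p' pv by auto
    qed
  qed
  have fin: "finite ((\<lambda>S. mob S a) ` ?P) \<or> finite ((\<lambda>S. mob S b) ` ?P)"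
    by (rule orbit2[OF img_det[OF grp hom] img_mult[OF grp hom] img_adj[OF grp hom] aQ bQ H])
  have sub: "(\<lambda>g. mob (\<rho> g) p) ` carrier G \<subseteq> (\<lambda>S. mob S p) ` ?P" for p
    using img_of[OF grp hom] by auto
  have "a \<in> closed_H2" "b \<in> closed_H2" unfolding a_b_def by (simp_all add: pt_closed)
  then show False using fin sub nel finite_subset unfolding elementary_def by metis
qed


definition mx :: "real^2^2 \<Rightarrow> real" where
  "mx M = max (max \<bar>M$1$1\<bar> \<bar>M$1$2\<bar>) (max \<bar>M$2$1\<bar> \<bar>M$2$2\<bar>)"

lemma mx_mk: "mx (mk a b c d) = max (max \<bar>a\<bar> \<bar>b\<bar>) (max \<bar>c\<bar> \<bar>d\<bar>)" by (simp add: mx_def)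

lemma mx_ge: "\<bar>M$1$1\<bar> \<le> mx M" "\<bar>M$1$2\<bar> \<le> mx M" "\<bar>M$2$1\<bar> \<le> mx M" "\<bar>M$2$2\<bar> \<le> mx M"
  by (simp_all add: mx_def le_max_iff_disj)

lemma mx_nonneg: "0 \<le> mx M" using mx_ge(1)[of M] by linarith

lemma mx_le: "mx M \<le> e \<longleftrightarrow> \<bar>M$1$1\<bar> \<le> e \<and> \<bar>M$1$2\<bar> \<le> e \<and> \<bar>M$2$1\<bar> \<le> e \<and> \<bar>M$2$2\<bar> \<le> e"
  by (simp add: mx_def)

lemma pb2: "\<bar>x::real\<bar> \<le> a \<Longrightarrow> \<bar>y\<bar> \<le> b \<Longrightarrow> \<bar>x * y\<bar> \<le> a * b"
  unfolding abs_mult by (rule mult_mono) auto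

lemma mx_mult: "mx (A ** B) \<le> 2 * mx A * mx B"
proof -
  have e: "\<bar>x * y + z * w\<bar> \<le> 2 * mx A * mx B" if "\<bar>x\<bar> \<le> mx A" "\<bar>y\<bar> \<le> mx B" "\<bar>z\<bar> \<le> mx A" "\<bar>w\<bar> \<le> mx B" for x y z w :: real
    using pb2[OF that(1,2)] pb2[OF that(3,4)] by linarith
  show ?thesis
    by (subst mk_eta[of A], subst mk_eta[of B], unfold mk_mult mx_le mk_nth)
      (intro conjI e; simp add: mx_ge)
qed

lemma mx_adj: "mx (adj M) = mx M"
  by (subst (1 2) mk_eta[of M]) (simp add: mx_mk max.commute max.left_commute max.assoc)

lemma mx_add: "mx (A + B) \<le> mx A + mx B"
proof -
  have e: "\<bar>x + y\<bar> \<le> mx A + mx B" if "\<bar>x\<bar> \<le> mx A" "\<bar>y\<bar> \<le> mx B" for x y :: real using that by linarith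
  show ?thesis unfolding mx_le using e[OF mx_ge(1)[of A] mx_ge(1)[of B]] e[OF mx_ge(2)[of A] mx_ge(2)[of B]]
     e[OF mx_ge(3)[of A] mx_ge(3)[of B]] e[OF mx_ge(4)[of A] mx_ge(4)[of B]] by simp
qed

lemma adj_minus_one: "adj A - mat 1 = adj (A - mat 1)"
  by (subst (1 2) mk_eta[of A]) (simp add: mk_one)

lemma near_mult:
  assumes "mx (A - mat 1) \<le> \<alpha>" "mx (B - mat 1) \<le> \<beta>" "\<alpha> \<le> 1" "\<beta> \<le> 1"
  shows "mx (A ** B - mat 1) \<le> 3 * (\<alpha> + \<beta>)"
proof -
  have e: "A ** B - mat 1 = (A - mat 1) + ((B - mat 1) + (A - mat 1) ** (B - mat 1))"
    by (simp add: mm_diff_left mm_diff_right algebra_simps)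
  have "mx (A ** B - mat 1) \<le> mx (A - mat 1) + (mx (B - mat 1) + 2 * mx (A - mat 1) * mx (B - mat 1))"
    unfolding e using mx_add mx_mult by (meson add_left_mono order_trans)
  also have "\<dots> \<le> \<alpha> + (\<beta> + 2 * \<alpha> * \<beta>)"
    using assms mx_nonneg[of "A - mat 1"] mx_nonneg[of "B - mat 1"] by (intro add_mono mult_mono) auto
  also have "\<dots> \<le> 3 * (\<alpha> + \<beta>)"
  proof -
    have "\<alpha> * \<beta> \<le> 1 * \<beta>" using assms mx_nonneg[of "B - mat 1"] by (intro mult_right_mono) auto
    then have "2 * \<alpha> * \<beta> \<le> 2 * \<beta>" by simp
    moreover have "0 \<le> \<alpha>" using assms(1) mx_nonneg[of "A - mat 1"] by linarith
    ultimately show ?thesis by simp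
  qed
  finally show ?thesis .
qed

lemma near_adj: "mx (adj A - mat 1) = mx (A - mat 1)"
  by (simp add: adj_minus_one mx_adj)

lemma near_conj:
  assumes "det S = 1" "mx S \<le> C"
  shows "mx (S ** T ** adj S - mat 1) \<le> 4 * C^2 * mx (T - mat 1)"
proof -
  have e: "S ** T ** adj S - mat 1 = S ** (T - mat 1) ** adj S"
    using adj_right[OF assms(1)] by (simp add: mm_diff_left mm_diff_right)
  have C0: "0 \<le> C" using assms(2) mx_nonneg[of S] by linarith
  have "mx (S ** (T - mat 1) ** adj S) \<le> 2 * mx (S ** (T - mat 1)) * mx (adj S)" by (rule mx_mult)
  also have "\<dots> \<le> 2 * (2 * mx S * mx (T - mat 1)) * mx S"
    unfolding mx_adj using mx_mult[of S "T - mat 1"] mx_nonneg[of S] by (intro mult_right_mono) auto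
  also have "\<dots> = 4 * (mx S * mx S) * mx (T - mat 1)" by simp
  also have "\<dots> \<le> 4 * (C * C) * mx (T - mat 1)"
  proof -
    have "mx S * mx S \<le> C * C" using assms(2) mx_nonneg[of S] C0 by (intro mult_mono) auto
    then show ?thesis using mx_nonneg[of "T - mat 1"] by (intro mult_right_mono) auto
  qed
  finally show ?thesis unfolding e by (simp add: power2_eq_square)
qed

lemma near_trc: "mx (E - mat 1) \<le> 1/2 \<Longrightarrow> trc E \<ge> 1"
proof -
  assume a: "mx (E - mat 1) \<le> 1/2"
  have "\<bar>E$1$1 - 1\<bar> \<le> 1/2" "\<bar>E$2$2 - 1\<bar> \<le> 1/2"
    using mx_ge(1)[of "E - mat 1"] mx_ge(4)[of "E - mat 1"] a by (simp_all add: mat_def)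
  then show ?thesis unfolding trc_def by linarith
qed


lemma mx_le_norm: "mx M \<le> norm M"
proof -
  have c: "\<bar>M$i$j\<bar> \<le> norm M" for i j
    using component_le_norm_cart[of "M$i" j] Finite_Cartesian_Product.norm_nth_le[of M i] by linarith
  show ?thesis unfolding mx_le using c by simp
qed

lemma near_id:
  fixes G :: "('g, 'z) monoid_scheme" and \<rho> :: "'g \<Rightarrow> real^2^2"
  assumes grp: "group G" and hom: "psl_hom G \<rho>" and nd: "\<not> discrete_rep G \<rho>" and ep: "e > 0"
  shows "\<exists>T\<in>psl_image G \<rho>. T \<noteq> mat 1 \<and> T \<noteq> - mat 1 \<and> mx (T - mat 1) \<le> e"
proof -
  let ?P = "psl_image G \<rho>"
  from nd obtain A where A: "A \<in> ?P" and Aacc: "\<And>e'. e' > 0 \<Longrightarrow> \<exists>B\<in>?P. dist B A < e' \<and> B \<noteq> A"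
    unfolding discrete_rep_def discrete_set_def by (metis (full_types))
  define e1 where "e1 = min e (1/2)"
  have e1p: "e1 > 0" using ep e1_def by simp
  define e' where "e' = e1 / (2 * (mx A + 1))"
  have mA: "mx A \<ge> 0" by (rule mx_nonneg)
  have e'p: "e' > 0" unfolding e'_def using e1p mA by simp
  obtain B where B: "B \<in> ?P" "dist B A < e'" "B \<noteq> A" using Aacc[OF e'p] by blast
  have dA: "det A = 1" using img_det[OF grp hom A] .
  define T where "T = adj A ** B"
  have TP: "T \<in> ?P" unfolding T_def using img_mult[OF grp hom img_adj[OF grp hom A] B(1)] .
  have TI: "T - mat 1 = adj A ** (B - A)" unfolding T_def using adj_left[OF dA] by (simp add: mm_diff_right)
  have "mx (T - mat 1) \<le> 2 * mx (adj A) * mx (B - A)" unfolding TI by (rule mx_mult)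
  also have "\<dots> \<le> 2 * (mx A + 1) * e'"
  proof -
    have "mx (B - A) \<le> e'" using mx_le_norm[of "B - A"] B(2) by (simp add: dist_norm)
    then show ?thesis unfolding mx_adj using mA mx_nonneg[of "B - A"] by (intro mult_mono) auto
  qed
  also have "\<dots> = e1" unfolding e'_def using mA by simp
  finally have Tm: "mx (T - mat 1) \<le> e1" .
  have "T \<noteq> mat 1"
  proof
    assume "T = mat 1"
    then have "A ** T = A" by simp
    then have "B = A" unfolding T_def using adj_right[OF dA] by (simp add: matrix_mul_assoc)
    then show False using B(3) by simp
  qed
  moreover have "T \<noteq> - mat 1"
  proof
    assume "T = - mat 1"
    then have "mx (T - mat 1) = 2" by (simp add: mk_one mx_mk)
    then show False using Tm e1_def by simp
  qed
  ultimately show ?thesis using TP Tm e1_def by auto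
qed


context fixes S X Y M A B :: "real^2^2" begin

lemma T1: "S ** (c *\<^sub>R mat 1 + X) ** adj S = (c * det S) *\<^sub>R mat 1 + S ** X ** adj S"
proof -
  obtain a b c' d where X: "X = mk a b c' d" using mk_eta by blast
  obtain p q r u where S: "S = mk p q r u" using mk_eta by blast
  show ?thesis unfolding X S by (simp add: mk_one algebra_simps)
qed

lemma T2: "trc ((c *\<^sub>R mat 1 + X) ** (k *\<^sub>R mat 1 + Y)) = 2*c*k + c * trc Y + k * trc X + trc (X ** Y)"
proof -
  obtain a b c' d where X: "X = mk a b c' d" using mk_eta by blast
  obtain p q r u where Y: "Y = mk p q r u" using mk_eta by blast
  show ?thesis unfolding X Y by (simp add: mk_one algebra_simps)
qed

lemma T3: "det (c *\<^sub>R mat 1 + X) = c^2 + c * trc X + det X"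
proof -
  obtain a b c' d where X: "X = mk a b c' d" using mk_eta by blast
  show ?thesis unfolding X by (simp add: mk_one algebra_simps power2_eq_square)
qed

lemma T4: "adj M = trc M *\<^sub>R mat 1 - M"
proof -
  obtain a b c' d where M: "M = mk a b c' d" using mk_eta by blast
  show ?thesis unfolding M by (simp add: mk_one algebra_simps)
qed

lemma fricke: "trc (A ** B ** adj A ** adj B) = det B * (trc A)^2 + det A * (trc B)^2 + (trc (A ** B))^2
   - trc A * trc B * trc (A ** B) - 2 * det A * det B"
proof -
  obtain a b c d where A: "A = mk a b c d" using mk_eta by blast
  obtain p q r u where B: "B = mk p q r u" using mk_eta by blast
  show ?thesis unfolding A B by (simp add: algebra_simps power2_eq_square)
qed

lemma trc_conj_gen: "trc (S ** X ** adj S) = det S * trc X"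
proof -
  obtain a b c' d where X: "X = mk a b c' d" using mk_eta by blast
  obtain p q r u where S: "S = mk p q r u" using mk_eta by blast
  show ?thesis unfolding X S by (simp add: algebra_simps)
qed

lemma trc_add: "trc (X + Y) = trc X + trc Y" by (simp add: trc_def)

end

lemma trace_facts:
  fixes T S :: "real^2^2"
  assumes dT: "det T = 1" and dS: "det S = 1"
  defines "c \<equiv> trc T / 2"
  defines "X \<equiv> T - c *\<^sub>R mat 1"
  defines "T' \<equiv> S ** T ** adj S"
  shows "(trc (T ** T') - 2) * (trc (T ** adj T') - 2) = -4 * gS S X"
    and "trc (T ** T' ** adj T ** adj T') = 2 - (trc (T ** T') - 2) * (trc (T ** adj T') - 2)"
    and "det X = 1 - c^2" and "trc X = 0"
proof -
  have TX: "T = c *\<^sub>R mat 1 + X" unfolding X_def by simp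
  have tX: "trc X = 0" unfolding X_def c_def by (simp add: trc_def mat_def)
  define X' where "X' = S ** X ** adj S"
  have T'X: "T' = c *\<^sub>R mat 1 + X'" unfolding T'_def X'_def using T1[of S c X] dS TX by simp
  have tX': "trc X' = 0" unfolding X'_def using trc_conj_gen tX by simp
  have dX: "det X = 1 - c^2" using T3[of c X] dT tX TX by simp
  have x: "trc (T ** T') = 2*c^2 + trc (X ** X')" unfolding TX T'X T2 using tX tX' by (simp add: power2_eq_square)
  have tT: "trc T = 2*c" unfolding c_def by simp
  have tT': "trc T' = 2*c" unfolding T'X using tX' by (simp add: trc_add trc_def mat_def)
  have y: "trc (T ** adj T') = 4*c^2 - trc (T ** T')"
  proof -
    have "T ** adj T' = trc T' *\<^sub>R T - T ** T'" unfolding T4[of T'] by (simp add: mm_diff_right mm_scaleR_right)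
    then show ?thesis unfolding tT' by (simp add: trc_diff trc_scaleR tT power2_eq_square)
  qed
  show "(trc (T ** T') - 2) * (trc (T ** adj T') - 2) = -4 * gS S X"
    unfolding y x gS_def X'_def[symmetric] dX by (simp add: power2_eq_square algebra_simps)
  have dT': "det T' = 1" unfolding T'_def using dT dS by (simp add: det_mult)
  show "trc (T ** T' ** adj T ** adj T') = 2 - (trc (T ** T') - 2) * (trc (T ** adj T') - 2)"
    unfolding fricke y dT dT' tT tT' by (simp add: power2_eq_square algebra_simps)
  show "det X = 1 - c^2" by (rule dX)
  show "trc X = 0" by (rule tX)
qed


lemma cont_entry: "continuous_on UNIV (\<lambda>X::real^2^2. X$i$j)"
  by (rule continuous_on_component, rule continuous_on_component, rule continuous_on_id)

lemma mk_lin: "mk a b c d = a *\<^sub>R mk 1 0 0 0 + b *\<^sub>R mk 0 1 0 0 + c *\<^sub>R mk 0 0 1 0 + d *\<^sub>R mk 0 0 0 1"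
  by (simp only: mk_scaleR mk_add) simp

lemma cont_mk: "continuous_on U a \<Longrightarrow> continuous_on U b \<Longrightarrow> continuous_on U c \<Longrightarrow> continuous_on U d \<Longrightarrow>
  continuous_on U (\<lambda>x. mk (a x) (b x) (c x) (d x))"
proof -
  assume ha: "continuous_on U a" and hb: "continuous_on U b" and hc: "continuous_on U c" and hd: "continuous_on U d"
  have s: "continuous_on U (\<lambda>x. f x *\<^sub>R (M::real^2^2))" if "continuous_on U f" for f M
    by (rule continuous_on_scaleR[OF that continuous_on_const])
  show ?thesis
    by (subst mk_lin, rule continuous_on_add[OF continuous_on_add[OF continuous_on_add[OF s[OF ha] s[OF hb]] s[OF hc]] s[OF hd]])
qed

lemma mm_entries: "(A::real^2^2) ** (B::real^2^2) = mk (A$1$1*B$1$1 + A$1$2*B$2$1) (A$1$1*B$1$2 + A$1$2*B$2$2) (A$2$1*B$1$1 + A$2$2*B$2$1) (A$2$1*B$1$2 + A$2$2*B$2$2)"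
  by (subst mk_eta[of A], subst mk_eta[of B]) simp

lemma cont_ent: "continuous_on U f \<Longrightarrow> continuous_on U (\<lambda>x. (f x :: real^2^2)$i$j)"
  by (rule continuous_on_component, rule continuous_on_component, assumption)

lemma cont_mm: "continuous_on U f \<Longrightarrow> continuous_on U g \<Longrightarrow> continuous_on U (\<lambda>x. (f x :: real^2^2) ** (g x :: real^2^2))"
proof -
  assume f: "continuous_on U f" and g: "continuous_on U g"
  have e: "continuous_on U (\<lambda>x. f x $i$j * g x $k$l + f x $i$m * g x $m$l)" for i j k l m
    by (intro continuous_on_add continuous_on_mult cont_ent[OF f] cont_ent[OF g])
  show ?thesis unfolding mm_entries by (intro cont_mk e)
qed

lemma cont_trc: "continuous_on U f \<Longrightarrow> continuous_on U (\<lambda>x. trc (f x))"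
  unfolding trc_def by (intro continuous_on_add; erule cont_ent)

lemma cont_det: "continuous_on U f \<Longrightarrow> continuous_on U (\<lambda>x. det (f x :: real^2^2))"
  unfolding det_2 by (intro continuous_on_diff continuous_on_mult; erule cont_ent)

lemma gS_cont: "continuous_on UNIV (\<lambda>X. gS S X)"
proof -
  have c1: "continuous_on UNIV (\<lambda>X::real^2^2. X ** (S ** X ** adj S))"
    by (intro cont_mm continuous_on_id continuous_on_const)
  show ?thesis unfolding gS_def
    by (intro continuous_on_diff continuous_on_power continuous_on_divide cont_trc[OF c1] cont_det[OF continuous_on_id] continuous_on_const) auto
qed

definition Kset :: "(real^2^2) set" where
  "Kset = {X. trc X = 0 \<and> norm X = 1 \<and> det X \<le> 0}"

lemma Kset_compact: "compact Kset"
proof -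
  have "Kset = {X. X$1$1 + X$2$2 = 0} \<inter> {X. norm X = 1} \<inter> {X. X$1$1 * X$2$2 - X$1$2 * X$2$1 \<le> 0}"
    unfolding Kset_def trc_def by (auto simp: det_2)
  moreover have "closed \<dots>"
  proof -
    have c1: "continuous_on UNIV (\<lambda>X::real^2^2. X$1$1 + X$2$2)" by (rule continuous_on_add[OF cont_entry cont_entry])
    have c2: "continuous_on UNIV (\<lambda>X::real^2^2. X$1$1 * X$2$2 - X$1$2 * X$2$1)"
      by (rule continuous_on_diff[OF continuous_on_mult[OF cont_entry cont_entry] continuous_on_mult[OF cont_entry cont_entry]])
    have c3: "continuous_on UNIV (\<lambda>X::real^2^2. norm X)" by (rule continuous_on_norm_id)
    show ?thesis
      by (intro closed_Int closed_Collect_eq[OF c1 continuous_on_const] closed_Collect_eq[OF c3 continuous_on_const]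
          closed_Collect_le[OF c2 continuous_on_const])
  qed
  moreover have "bounded Kset" unfolding Kset_def bounded_iff by auto
  ultimately show ?thesis using compact_eq_bounded_closed by metis
qed

lemma gS_scale: "gS S (x *\<^sub>R X) = x^4 * gS S X"
  unfolding gS_def by (simp add: mm_scaleR_left mm_scaleR_right trc_scaleR det_scaleR2 power2_eq_square power4_eq_xxxx field_simps)

lemma finite_S:
  fixes G :: "('g, 'z) monoid_scheme" and \<rho> :: "'g \<Rightarrow> real^2^2"
  assumes grp: "group G" and hom: "psl_hom G \<rho>" and nel: "\<not> elementary G \<rho>"
  shows "\<exists>D. finite D \<and> D \<subseteq> psl_image G \<rho> \<and>
     (\<forall>X. trc X = 0 \<and> X \<noteq> 0 \<and> det X \<le> 0 \<longrightarrow> (\<exists>S\<in>D. gS S X \<noteq> 0))"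
proof -
  let ?P = "psl_image G \<rho>"
  have opn: "open {X. gS S X \<noteq> 0}" for S
    using open_Collect_neq[OF gS_cont continuous_on_const] by simp
  have cov: "Kset \<subseteq> (\<Union>S\<in>?P. {X. gS S X \<noteq> 0})"
  proof
    fix X assume X: "X \<in> Kset"
    then have "X \<noteq> mk 0 0 0 0" unfolding Kset_def using mat0 by auto
    then obtain S where "S \<in> ?P" "gS S X \<noteq> 0" using nondeg[OF grp hom nel] X unfolding Kset_def by blast
    then show "X \<in> (\<Union>S\<in>?P. {X. gS S X \<noteq> 0})" by blast
  qed
  obtain D where D: "D \<subseteq> ?P" "finite D" "Kset \<subseteq> (\<Union>S\<in>D. {X. gS S X \<noteq> 0})"
    using compactE_image[OF Kset_compact opn cov] by blast
  have "\<exists>S\<in>D. gS S X \<noteq> 0" if X: "trc X = 0" "X \<noteq> 0" "det X \<le> 0" for X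
  proof -
    define Y where "Y = (1 / norm X) *\<^sub>R X"
    have nX: "norm X > 0" using X by simp
    have "Y \<in> Kset" unfolding Kset_def Y_def using X nX
      by (simp add: trc_scaleR det_scaleR2 mult_nonneg_nonpos)
    then obtain S where S: "S \<in> D" "gS S Y \<noteq> 0" using D(3) by blast
    then have "gS S X \<noteq> 0" unfolding Y_def gS_scale by simp
    then show ?thesis using S by blast
  qed
  then show ?thesis using D by blast
qed


lemma close_of_mx:
  assumes "mx (B - mat 1) \<le> e"
  shows "\<bar>B$1$1 - 1\<bar> \<le> e \<and> \<bar>B$1$2\<bar> \<le> e \<and> \<bar>B$2$1\<bar> \<le> e \<and> \<bar>B$2$2 - 1\<bar> \<le> e"
  using assms unfolding mx_le by (simp add: mat_def)

lemma NI:
  fixes G :: "('g, 'z) monoid_scheme" and \<rho> :: "'g \<Rightarrow> real^2^2"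
  assumes grp: "group G" and hom: "psl_hom G \<rho>" and nel: "\<not> elementary G \<rho>" and nd: "\<not> discrete_rep G \<rho>"
    and etap: "\<eta> > 0"
  shows "\<exists>B\<in>psl_image G \<rho>. \<bar>trc B\<bar> < 2 \<and> \<bar>B$1$1 - 1\<bar> \<le> \<eta> \<and> \<bar>B$1$2\<bar> \<le> \<eta>
                \<and> \<bar>B$2$1\<bar> \<le> \<eta> \<and> \<bar>B$2$2 - 1\<bar> \<le> \<eta>"
proof -
  let ?P = "psl_image G \<rho>"
  obtain D where D: "finite D" "D \<subseteq> ?P" "\<And>X. trc X = 0 \<Longrightarrow> X \<noteq> 0 \<Longrightarrow> det X \<le> 0 \<Longrightarrow> \<exists>S\<in>D. gS S X \<noteq> 0"
    using finite_S[OF grp hom nel] by blast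
  define C where "C = Max (insert 1 (mx ` D))"
  have C1: "C \<ge> 1" unfolding C_def using D(1) by simp
  have CD: "mx S \<le> C" if "S \<in> D" for S unfolding C_def using D(1) that by simp
  define e where "e = min \<eta> (1/2)"
  have ep: "e > 0" "e \<le> \<eta>" "e \<le> 1/2" using etap e_def by auto
  define a where "a = e / (200 * C^2)"
  have C2: "C^2 \<ge> 1" using C1 by (simp add: one_le_power)
  have ap: "a > 0" unfolding a_def using ep C2 by (intro divide_pos_pos) auto
  have ae: "a \<le> e / 200" unfolding a_def using ep C2 C1 divide_left_mono[of "200 * 1" "200 * C^2" e] by simp
  have aC: "4 * C^2 * a = e / 50" unfolding a_def using C1 by (simp add: field_simps)
  obtain T where T: "T \<in> ?P" "T \<noteq> mat 1" "T \<noteq> - mat 1" "mx (T - mat 1) \<le> a"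
    using near_id[OF grp hom nd ap] by blast
  have dT: "det T = 1" using img_det[OF grp hom T(1)] .
  show ?thesis
  proof (cases "\<bar>trc T\<bar> < 2")
    case True
    then show ?thesis using T close_of_mx[of T \<eta>] ae ep by (intro bexI[of _ T]) auto
  next
    case False
    define c where "c = trc T / 2"
    define X where "X = T - c *\<^sub>R mat 1"
    have dX: "det X = 1 - c^2" and tX: "trc X = 0"
      using trace_facts(3,4)[OF dT dT] unfolding c_def X_def by auto
    have c2: "c^2 \<ge> 1"
    proof -
      have "\<bar>c\<bar> \<ge> 1" using False c_def by simp
      then have "1^2 \<le> \<bar>c\<bar>^2" by (intro power_mono) auto
      then show ?thesis by simp
    qed
    have X0: "X \<noteq> 0"
    proof
      assume "X = 0"
      then have TcI: "T = c *\<^sub>R mat 1" unfolding X_def by simp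
      then have "c^2 = 1" using dT by (simp add: mk_one power2_eq_square)
      then have "c = 1 \<or> c = -1" by (simp add: power2_eq_1_iff)
      then show False using TcI T(2,3) by (auto simp: mk_one)
    qed
    obtain S where S: "S \<in> D" "gS S X \<noteq> 0" using D(3)[OF tX X0] dX c2 by auto
    have SP: "S \<in> ?P" using S D(2) by auto
    have dS: "det S = 1" using img_det[OF grp hom SP] .
    define T' where "T' = S ** T ** adj S"
    have T'P: "T' \<in> ?P" unfolding T'_def using img_mult[OF grp hom img_mult[OF grp hom SP T(1)] img_adj[OF grp hom SP]] .
    have bT': "mx (T' - mat 1) \<le> e / 50"
      using near_conj[OF dS CD[OF S(1)], of T] T(4) aC C2 mx_nonneg[of "T - mat 1"] unfolding T'_def
      by (smt (verit) mult_left_mono zero_le_power2)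
    have fa: "(trc (T ** T') - 2) * (trc (T ** adj T') - 2) = -4 * gS S X"
      and fb: "trc (T ** T' ** adj T ** adj T') = 2 - (trc (T ** T') - 2) * (trc (T ** adj T') - 2)"
      using trace_facts(1,2)[OF dT dS] unfolding c_def X_def T'_def by auto
    have a1: "a \<le> 1" "e / 50 \<le> 1" using ae ep by auto
    have b50: "50 * (e / 50) = e" by simp
    have a200: "200 * a \<le> e" using ae by simp
    have bT'a: "mx (adj T' - mat 1) \<le> e / 50" using bT' near_adj by simp
    have bTa: "mx (adj T - mat 1) \<le> a" using T(4) near_adj by simp
    have E1: "mx (T ** T' - mat 1) \<le> 3 * (a + e / 50)" by (rule near_mult[OF T(4) bT' a1])
    have E2: "mx (T ** adj T' - mat 1) \<le> 3 * (a + e / 50)" by (rule near_mult[OF T(4) bT'a a1])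
    have s1: "3 * (a + e / 50) \<le> 1" using a200 ep ap by (simp add: field_simps)
    have E12: "mx (T ** T' ** adj T - mat 1) \<le> 3 * (3 * (a + e / 50) + a)" by (rule near_mult[OF E1 bTa s1 a1(1)])
    have s2: "3 * (3 * (a + e / 50) + a) \<le> 1" using a200 ep ap by (simp add: field_simps)
    have E3: "mx (T ** T' ** adj T ** adj T' - mat 1) \<le> 3 * (3 * (3 * (a + e / 50) + a) + e / 50)"
      by (rule near_mult[OF E12 bT'a s2 a1(2)])
    have f1: "3 * (a + e / 50) \<le> e" "3 * (3 * (3 * (a + e / 50) + a) + e / 50) \<le> e" using a200 ep ap by (simp_all add: field_simps)
    have m1: "mx (T ** T' - mat 1) \<le> e" using E1 f1 by linarith
    have m2: "mx (T ** adj T' - mat 1) \<le> e" using E2 f1 by linarith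
    have m3: "mx (T ** T' ** adj T ** adj T' - mat 1) \<le> e" using E3 f1 by linarith
    have t1: "trc (T ** T') \<ge> 1" using near_trc m1 ep by simp
    have t2: "trc (T ** adj T') \<ge> 1" using near_trc m2 ep by simp
    have t3: "trc (T ** T' ** adj T ** adj T') \<ge> 1" using near_trc m3 ep by simp
    have P1: "T ** T' \<in> ?P" using img_mult[OF grp hom T(1) T'P] .
    have P2: "T ** adj T' \<in> ?P" using img_mult[OF grp hom T(1) img_adj[OF grp hom T'P]] .
    have P3: "T ** T' ** adj T ** adj T' \<in> ?P"
      using img_mult[OF grp hom img_mult[OF grp hom P1 img_adj[OF grp hom T(1)]] img_adj[OF grp hom T'P]] .
    have ne: "(trc (T ** T') - 2) * (trc (T ** adj T') - 2) \<noteq> 0" using fa S(2) by simp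
    show ?thesis
    proof (cases "trc (T ** T') < 2")
      case True
      then show ?thesis using P1 t1 close_of_mx[OF m1] ep by (intro bexI[of _ "T ** T'"]) auto
    next
      case F1: False
      show ?thesis
      proof (cases "trc (T ** adj T') < 2")
        case True
        then show ?thesis using P2 t2 close_of_mx[OF m2] ep by (intro bexI[of _ "T ** adj T'"]) auto
      next
        case F2: False
        have "(trc (T ** T') - 2) * (trc (T ** adj T') - 2) > 0"
          using F1 F2 ne by (simp add: not_less)
        then have "trc (T ** T' ** adj T ** adj T') < 2" using fb by simp
        then show ?thesis using P3 t3 close_of_mx[OF m3] ep by (intro bexI[of _ "T ** T' ** adj T ** adj T'"]) auto
      qed
    qed
  qed
qed


theorem mainTheorem2:
  fixes G :: "('g, 'z) monoid_scheme"
    and \<rho>1 \<rho>2 :: "'g \<Rightarrow> real^2^2"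
  assumes "group G"
    and "psl_hom G \<rho>1" and "psl_hom G \<rho>2"
    and "\<not> elementary G \<rho>1"
    and "\<not> discrete_rep G \<rho>1"
    and "\<forall>\<gamma>\<in>carrier G. rot (\<rho>1 \<gamma>) = rot (\<rho>2 \<gamma>)"
  shows "\<forall>\<gamma>\<in>carrier G. abs_tr (\<rho>1 \<gamma>) = abs_tr (\<rho>2 \<gamma>)"
proof
  fix \<gamma> assume g: "\<gamma> \<in> carrier G"
  show "abs_tr (\<rho>1 \<gamma>) = abs_tr (\<rho>2 \<gamma>)"
    by (rule assemble[OF assms(1,2,3,6) NI[OF assms(1,2,4,5)] g])
qed


end
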